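(* Let $A=(a_0;a_1,\dots,a_n;a_{n+1})$ be a generator of $\mathcal C_S$, and let $\mathcal C_A$ be the sub-DGA of $\mathcal C_S$ generated by all pieces $A_i$ of all cuts $(A_1,\dots,A_k)$ of $A$. Then $H^0B(\mathcal C_A)$ is generated, as a $\mathbb Q$-algebra (under the shuffle product), by the elements $T(B)$ where $B$ ranges over the pieces of cuts of $A$.
   Context: $\mathcal C_S$ ($S$ a set) is the graded-commutative unital $\mathbb Q$-algebra freely generated by symbols $(a_0;a_1,\dots,a_n;a_{n+1})$, $n\ge1$, $a_i\in S$, of degree 1 and Adams degree $n$, with differential the derivation $dA=-\sum_{\text{2-cuts}}A'A''$. A 2-cut of $A$ is, for $0\le i<j\le n$, $(i,j)\ne(0,n)$, the pair $A'=(a_0;a_1,\dots,a_i,a_{j+1},\dots,a_n;a_{n+1})$, $A''=(a_i;a_{i+1},\dots,a_j;a_{j+1})$; $k$-cuts are ordered $k$-tuples obtained iteratively from the 1-cut $(A)$ by replacing an entry by the two consecutive entries of one of its 2-cuts (recorded by index positions). For a generator $B$, $T(B)=\sum_{\text{cuts }(B_1,\dots,B_k)\text{ of }B}[B_1|\cdots|B_k]$ in the bar construction $B(\mathcal C_A)$ (standard bar construction of an augmented commutative DGA, with shuffle product and deconcatenation coproduct); $T(B)$ is a cocycle. *)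

theory Defs
  imports Complex_Main
begin

(* A generator (a_0; a_1,...,a_n; a_{n+1}) of C_S (n >= 1, a_i in S) is encoded as the
   list [a_0, a_1, ..., a_{n+1}] :: 'a list of length n+2 >= 3; the set S is the type 'a. *)

definition is_generator :: "'a list \<Rightarrow> bool" where
  "is_generator A \<longleftrightarrow> length A \<ge> 3"

(* Pieces of cuts are recorded by index positions: a piece is an increasing list of
   positions into the original generator. 2-cuts of an index list p = [p_0,...,p_{m+1}]:
   for 0 <= i < j <= m, (i,j) ~= (0,m):
     A'  = (p_0; p_1..p_i, p_{j+1}..p_m; p_{m+1}),   A'' = (p_i; p_{i+1}..p_j; p_{j+1}). *)
definition twocuts_idx :: "nat list \<Rightarrow> (nat list \<times> nat list) set" where
  "twocuts_idx p =
     {(take (i+1) p @ drop (j+1) p, take (j - i + 2) (drop i p)) | i j.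
        i < j \<and> j \<le> length p - 2 \<and> (i, j) \<noteq> (0, length p - 2)}"

inductive_set cuts_idx :: "nat \<Rightarrow> nat list list set" for L :: nat where
  base: "[[0..<L]] \<in> cuts_idx L"
| step: "c \<in> cuts_idx L \<Longrightarrow> k < length c \<Longrightarrow> (p, q) \<in> twocuts_idx (c ! k) \<Longrightarrow>
         take k c @ [p, q] @ drop (Suc k) c \<in> cuts_idx L"

definition sym_of :: "'a list \<Rightarrow> nat list \<Rightarrow> 'a list" where
  "sym_of b q = map (\<lambda>i. b ! i) q"

definition pieces :: "'a list \<Rightarrow> 'a list set" where
  "pieces A = {sym_of A q | c q. c \<in> cuts_idx (length A) \<and> q \<in> set c}"

(* Elements of the bar construction in bar degree 0: finitely supported Q-linear
   combinations of words [B_1|...|B_k] (k >= 0) of degree-1 elements; we use the basis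
   of words in generators. *)
type_synonym 'a bar0 = "'a list list \<Rightarrow> rat"

(* T(B) = sum over cuts (B_1,...,B_k) of B of [B_1|...|B_k] *)
definition T :: "'a list \<Rightarrow> 'a bar0" where
  "T b w = of_nat (card {c \<in> cuts_idx (length b). map (sym_of b) c = w})"

(* number of 2-cuts (c',c'') of the generator c with c' = a and c'' = b,
   so that d c = - sum_{a,b} ncut c a b * a b *)
definition ncut :: "'a list \<Rightarrow> 'a list \<Rightarrow> 'a list \<Rightarrow> nat" where
  "ncut c a b = card {(p, q) \<in> twocuts_idx [0..<length c]. sym_of c p = a \<and> sym_of c q = b}"

(* degree-0 part of B(C_A): words in the generators of C_A, i.e. in the pieces of A *)
definition bar0_space :: "'a list \<Rightarrow> 'a bar0 set" where
  "bar0_space A = {x. finite {w. x w \<noteq> 0} \<and> (\<forall>w. x w \<noteq> 0 \<longrightarrow> set w \<subseteq> pieces A)}"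

(* Bar differential of a degree-0 element, landing in bar degree 1, i.e. in the span of
   [u | a*b | v] with a*b in (C_A)^2 = Lambda^2 (C_A)^1.  bar_d x u a b v is the coefficient
   of the tensor [u | a (x) b | v] before passing to a*b = -b*a; the differential is
     d[B_1|...|B_k] = sum_i [..|dB_i|..] + sum_i [..|B_i B_{i+1}|..]. *)
definition bar_d :: "'a bar0 \<Rightarrow> 'a list list \<Rightarrow> 'a list \<Rightarrow> 'a list \<Rightarrow> 'a list list \<Rightarrow> rat" where
  "bar_d x u a b v =
     x (u @ [a, b] @ v) - (\<Sum>c\<in>{c. x (u @ c # v) \<noteq> 0}. x (u @ c # v) * of_nat (ncut c a b))"

(* H^0 B(C_A) = kernel of d on bar degree 0 (bar degree -1 is zero).  An element of
   V (x) V maps to 0 in Lambda^2 V iff its coefficient function is symmetric. *)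
definition H0 :: "'a list \<Rightarrow> 'a bar0 set" where
  "H0 A = {x \<in> bar0_space A. \<forall>u a b v. bar_d x u a b v = bar_d x u b a v}"

(* shuffle product (no signs in bar degree 0) and unit *)
definition shuffle_prod :: "'a bar0 \<Rightarrow> 'a bar0 \<Rightarrow> 'a bar0" where
  "shuffle_prod x y w = (\<Sum>I\<in>Pow {..<length w}. x (nths w I) * y (nths w ({..<length w} - I)))"

definition bar_one :: "'a bar0" where
  "bar_one w = (if w = [] then 1 else 0)"

inductive_set subalg_gen :: "'a bar0 set \<Rightarrow> 'a bar0 set" for G :: "'a bar0 set" where
  gen: "x \<in> G \<Longrightarrow> x \<in> subalg_gen G"
| one: "bar_one \<in> subalg_gen G"
| add: "x \<in> subalg_gen G \<Longrightarrow> y \<in> subalg_gen G \<Longrightarrow> (\<lambda>w. x w + y w) \<in> subalg_gen G"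
| smult: "x \<in> subalg_gen G \<Longrightarrow> (\<lambda>w. r * x w) \<in> subalg_gen G"
| mult: "x \<in> subalg_gen G \<Longrightarrow> y \<in> subalg_gen G \<Longrightarrow> shuffle_prod x y \<in> subalg_gen G"

end

theory Submission
  imports Defs
begin


definition dl :: "'a list \<Rightarrow> 'a bar0 \<Rightarrow> 'a bar0" where
  "dl a x = (\<lambda>w. x (a # w))"

lemma shuffle_Nil: "shuffle_prod x y [] = x [] * y []"
  by (simp add: shuffle_prod_def)

lemma nths_Suc_img: "nths (a # w) (Suc ` J) = nths w J"
  by (simp add: nths_Cons image_iff)

lemma nths_ins0_Suc_img: "nths (a # w) (insert 0 (Suc ` J)) = a # nths w J"
  by (simp add: nths_Cons image_iff)

lemma shuffle_Cons:
  "shuffle_prod x y (a # w) = shuffle_prod (dl a x) y w + shuffle_prod x (dl a y) w"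
proof -
  define n where "n = length w"
  define S where "S = Suc ` {..<n}"
  define F where "F I = x (nths (a#w) I) * y (nths (a#w) (insert 0 S - I))" for I
  have U: "{..<length (a#w)} = insert 0 S" by (simp add: S_def n_def lessThan_Suc_eq_insert_0)
  have PS: "Pow S = image Suc ` Pow {..<n}" unfolding S_def by (rule image_Pow_surj[symmetric]) simp
  have 0: "0 \<notin> S" by (simp add: S_def)
  have "shuffle_prod x y (a#w) = (\<Sum>I\<in>Pow (insert 0 S). F I)"
    unfolding shuffle_prod_def U F_def by simp
  also have "\<dots> = (\<Sum>I\<in>Pow S. F I) + (\<Sum>I\<in>insert 0 ` Pow S. F I)"
    unfolding Pow_insert
    by (rule sum.union_disjoint) (use 0 in \<open>auto simp: S_def\<close>)
  also have "(\<Sum>I\<in>insert 0 ` Pow S. F I) = (\<Sum>I\<in>Pow S. F (insert 0 I))"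
    proof (rule sum.reindex_cong[where l="insert 0"])
    show "inj_on (insert 0) (Pow S)"
    proof (rule inj_onI)
      fix I J assume "I \<in> Pow S" "J \<in> Pow S" "insert 0 I = insert 0 J"
      then have "insert 0 I - {0} = insert 0 J - {0}" by simp
      moreover have "0 \<notin> I" "0 \<notin> J" using 0 \<open>I \<in> Pow S\<close> \<open>J \<in> Pow S\<close> by auto
      ultimately show "I = J" by simp
    qed
  qed auto
  also have "(\<Sum>I\<in>Pow S. F (insert 0 I)) = (\<Sum>J\<in>Pow {..<n}. F (insert 0 (Suc ` J)))"
    unfolding PS by (subst sum.reindex) (simp_all add: inj_on_image_Pow o_def)
  also have "(\<Sum>I\<in>Pow S. F I) = (\<Sum>J\<in>Pow {..<n}. F (Suc ` J))"
    unfolding PS by (subst sum.reindex) (simp_all add: inj_on_image_Pow o_def)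
  also have "(\<Sum>J\<in>Pow {..<n}. F (Suc ` J)) = shuffle_prod x (dl a y) w"
    unfolding shuffle_prod_def n_def[symmetric]
  proof (rule sum.cong[OF refl])
    fix J assume J: "J \<in> Pow {..<n}"
    have "insert 0 S - Suc ` J = insert 0 (Suc ` ({..<n} - J))"
      using J by (auto simp: S_def)
    then show "F (Suc ` J) = x (nths w J) * dl a y (nths w ({..<n} - J))"
      unfolding F_def dl_def by (simp add: nths_Suc_img nths_ins0_Suc_img)
  qed
  also have "(\<Sum>J\<in>Pow {..<n}. F (insert 0 (Suc ` J))) = shuffle_prod (dl a x) y w"
    unfolding shuffle_prod_def n_def[symmetric]
  proof (rule sum.cong[OF refl])
    fix J assume J: "J \<in> Pow {..<n}"
    have "insert 0 S - insert 0 (Suc ` J) = Suc ` ({..<n} - J)"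
      using J by (auto simp: S_def)
    then show "F (insert 0 (Suc ` J)) = dl a x (nths w J) * y (nths w ({..<n} - J))"
      unfolding F_def dl_def by (simp add: nths_Suc_img nths_ins0_Suc_img)
  qed
  finally show ?thesis by simp
qed

definition fsupp :: "'a bar0 \<Rightarrow> bool" where
  "fsupp x \<longleftrightarrow> finite {w. x w \<noteq> 0}"

definition Symm :: "'a bar0 \<Rightarrow> bool" where
  "Symm x \<longleftrightarrow> (\<forall>u a b v. bar_d x u a b v = bar_d x u b a v)"

lemma fsupp_mid: "fsupp x \<Longrightarrow> finite {c. x (u @ c # v) \<noteq> 0}"
proof -
  assume "fsupp x"
  then have "finite ((\<lambda>c. u @ c # v) -` {w. x w \<noteq> 0})"
    unfolding fsupp_def by (rule finite_vimageI) (simp add: inj_on_def)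
  then show ?thesis by (simp add: vimage_def)
qed

lemma bar_d_alt:
  assumes "finite S" "{c. x (u @ c # v) \<noteq> 0} \<subseteq> S"
  shows "bar_d x u a b v = x (u @ [a, b] @ v) - (\<Sum>c\<in>S. x (u @ c # v) * of_nat (ncut c a b))"
proof -
  have "(\<Sum>c\<in>{c. x (u @ c # v) \<noteq> 0}. x (u @ c # v) * of_nat (ncut c a b))
      = (\<Sum>c\<in>S. x (u @ c # v) * of_nat (ncut c a b))"
    by (rule sum.mono_neutral_left) (use assms in auto)
  then show ?thesis unfolding bar_d_def by simp
qed

lemma bar_d_sum:
  assumes I: "finite I" and f: "\<And>i. i \<in> I \<Longrightarrow> fsupp (f i)"
  shows "bar_d (\<lambda>w. \<Sum>i\<in>I. f i w) u a b v = (\<Sum>i\<in>I. bar_d (f i) u a b v)"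
proof -
  define S where "S = (\<Union>i\<in>I. {c. f i (u @ c # v) \<noteq> 0})"
  have S: "finite S" unfolding S_def using I f fsupp_mid by blast
  have "bar_d (\<lambda>w. \<Sum>i\<in>I. f i w) u a b v =
     (\<Sum>i\<in>I. f i (u @ [a, b] @ v)) - (\<Sum>c\<in>S. (\<Sum>i\<in>I. f i (u @ c # v)) * of_nat (ncut c a b))"
  proof (rule bar_d_alt[OF S])
    show "{c. (\<Sum>i\<in>I. f i (u @ c # v)) \<noteq> 0} \<subseteq> S"
      unfolding S_def using sum.neutral by force
  qed
  also have "\<dots> = (\<Sum>i\<in>I. f i (u @ [a, b] @ v) - (\<Sum>c\<in>S. f i (u @ c # v) * of_nat (ncut c a b)))"
    by (simp add: sum_subtractf sum_distrib_right sum.swap[of _ S])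
  also have "\<dots> = (\<Sum>i\<in>I. bar_d (f i) u a b v)"
  proof (rule sum.cong[OF refl], rule bar_d_alt[symmetric, OF S])
    fix i assume "i \<in> I" then show "{c. f i (u @ c # v) \<noteq> 0} \<subseteq> S" unfolding S_def by blast
  qed
  finally show ?thesis .
qed

lemma bar_d_add:
  assumes "fsupp x" "fsupp y"
  shows "bar_d (\<lambda>w. x w + y w) u a b v = bar_d x u a b v + bar_d y u a b v"
proof -
  have "bar_d (\<lambda>w. \<Sum>i\<in>{True,False}. (if i then x else y) w) u a b v
        = (\<Sum>i\<in>{True,False}. bar_d (if i then x else y) u a b v)"
    by (rule bar_d_sum) (use assms in auto)
  then show ?thesis by simp
qed

lemma bar_d_smult:
  assumes "fsupp x"
  shows "bar_d (\<lambda>w. r * x w) u a b v = r * bar_d x u a b v"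
proof -
  have S: "finite {c. x (u @ c # v) \<noteq> 0}" using fsupp_mid[OF assms] .
  have "bar_d (\<lambda>w. r * x w) u a b v = r * x (u @ [a, b] @ v) -
          (\<Sum>c\<in>{c. x (u @ c # v) \<noteq> 0}. r * x (u @ c # v) * of_nat (ncut c a b))"
    by (rule bar_d_alt[OF S]) auto
  also have "\<dots> = r * bar_d x u a b v"
    unfolding bar_d_def by (simp add: sum_distrib_left right_diff_distrib mult.assoc)
  finally show ?thesis .
qed

lemma fsupp_add: "fsupp x \<Longrightarrow> fsupp y \<Longrightarrow> fsupp (\<lambda>w. x w + y w)"
  unfolding fsupp_def by (rule finite_subset[of _ "{w. x w \<noteq> 0} \<union> {w. y w \<noteq> 0}"]) auto

lemma fsupp_smult: "fsupp x \<Longrightarrow> fsupp (\<lambda>w. r * x w)"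
  unfolding fsupp_def by (rule finite_subset[of _ "{w. x w \<noteq> 0}"]) auto

lemma fsupp_sum: "finite I \<Longrightarrow> (\<And>i. i \<in> I \<Longrightarrow> fsupp (f i)) \<Longrightarrow> fsupp (\<lambda>w. \<Sum>i\<in>I. f i w)"
  unfolding fsupp_def
  by (rule finite_subset[of _ "\<Union>i\<in>I. {w. f i w \<noteq> 0}"]) (use sum.neutral in force)+

lemma fsupp_dl: "fsupp x \<Longrightarrow> fsupp (dl a x)"
proof -
  assume "fsupp x"
  then have "finite ((\<lambda>w. a # w) -` {w. x w \<noteq> 0})"
    unfolding fsupp_def by (rule finite_vimageI) (simp add: inj_on_def)
  then show ?thesis by (simp add: vimage_def fsupp_def dl_def)
qed

lemma bar_d_dl: "bar_d x (e # u) a b v = bar_d (dl e x) u a b v"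
  by (simp add: bar_d_def dl_def)

lemma Symm_dl: "Symm x \<Longrightarrow> Symm (dl e x)"
  by (simp add: Symm_def bar_d_dl[symmetric])

lemma shuffle_zero_left: "shuffle_prod (\<lambda>_. 0) y = (\<lambda>_. 0)"
  by (simp add: shuffle_prod_def fun_eq_iff)

lemma shuffle_zero_right: "shuffle_prod x (\<lambda>_. 0) = (\<lambda>_. 0)"
  by (simp add: shuffle_prod_def fun_eq_iff)

lemma shuffle_sum_left:
  "finite I \<Longrightarrow> shuffle_prod (\<lambda>w. \<Sum>i\<in>I. f i w) y w = (\<Sum>i\<in>I. shuffle_prod (f i) y w)"
  unfolding shuffle_prod_def by (simp add: sum_distrib_right sum.swap[of _ I])

lemma shuffle_sum_right:
  "finite I \<Longrightarrow> shuffle_prod x (\<lambda>w. \<Sum>i\<in>I. f i w) w = (\<Sum>i\<in>I. shuffle_prod x (f i) w)"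
  unfolding shuffle_prod_def by (simp add: sum_distrib_left sum.swap[of _ I])

lemma shuffle_diff_left:
  "shuffle_prod (\<lambda>w. f w - g w) y w = shuffle_prod f y w - shuffle_prod g y w"
  unfolding shuffle_prod_def by (simp add: left_diff_distrib sum_subtractf)

lemma shuffle_diff_right:
  "shuffle_prod x (\<lambda>w. f w - g w) w = shuffle_prod x f w - shuffle_prod x g w"
  unfolding shuffle_prod_def by (simp add: right_diff_distrib sum_subtractf)

lemma shuffle_add_left:
  "shuffle_prod (\<lambda>w. f w + g w) y w = shuffle_prod f y w + shuffle_prod g y w"
  unfolding shuffle_prod_def by (simp add: distrib_right sum.distrib)

lemma shuffle_add_right:
  "shuffle_prod x (\<lambda>w. f w + g w) w = shuffle_prod x f w + shuffle_prod x g w"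
  unfolding shuffle_prod_def by (simp add: distrib_left sum.distrib)

lemma shuffle_smult_left:
  "shuffle_prod (\<lambda>w. r * f w) y w = r * shuffle_prod f y w"
  unfolding shuffle_prod_def by (simp add: sum_distrib_left mult.assoc)

lemma shuffle_smult_right:
  "shuffle_prod x (\<lambda>w. r * f w) w = r * shuffle_prod x f w"
  unfolding shuffle_prod_def by (simp add: sum_distrib_left mult.left_commute)

lemma shuffle_smult_left':
  "shuffle_prod (\<lambda>w. f w * r) y w = shuffle_prod f y w * r"
  unfolding shuffle_prod_def sum_distrib_right by (rule sum.cong) (simp_all add: mult_ac)

lemma shuffle_smult_right':
  "shuffle_prod x (\<lambda>w. f w * r) w = shuffle_prod x f w * r"
  unfolding shuffle_prod_def sum_distrib_right by (rule sum.cong) (simp_all add: mult_ac)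

lemma dl_zero: "(\<forall>w. x (a # w) = 0) \<Longrightarrow> dl a x = (\<lambda>_. 0)"
  by (simp add: dl_def fun_eq_iff)

definition bnd :: "'a list set \<Rightarrow> nat \<Rightarrow> 'a bar0 \<Rightarrow> bool" where
  "bnd L n x \<longleftrightarrow> (\<forall>w. x w \<noteq> 0 \<longrightarrow> set w \<subseteq> L \<and> length w \<le> n)"

lemma bnd_dl: "bnd L n x \<Longrightarrow> bnd L (n - 1) (dl a x)"
  unfolding bnd_def dl_def by force

lemma shuffle_bnd:
  "bnd L n x \<Longrightarrow> bnd L m y \<Longrightarrow> bnd L (n + m) (shuffle_prod x y)"
proof (unfold bnd_def, intro allI impI)
  fix w
  show "\<forall>w. x w \<noteq> 0 \<longrightarrow> set w \<subseteq> L \<and> length w \<le> n \<Longrightarrow>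
        \<forall>w. y w \<noteq> 0 \<longrightarrow> set w \<subseteq> L \<and> length w \<le> m \<Longrightarrow>
        shuffle_prod x y w \<noteq> 0 \<Longrightarrow> set w \<subseteq> L \<and> length w \<le> n + m"
  proof (induction w arbitrary: x y n m)
    case Nil then show ?case by simp
  next
    case (Cons a w)
    from Cons.prems(3) have "shuffle_prod (dl a x) y w \<noteq> 0 \<or> shuffle_prod x (dl a y) w \<noteq> 0"
      by (auto simp: shuffle_Cons)
    then show ?case
    proof
      assume h: "shuffle_prod (dl a x) y w \<noteq> 0"
      then obtain w' where w': "x (a # w') \<noteq> 0"
        using dl_zero[of x a] shuffle_zero_left by metis
      then have aL: "a \<in> L" and n1: "n \<ge> 1" using Cons.prems(1) by fastforce+
      have "bnd L (n - 1) (dl a x)" using Cons.prems(1) bnd_dl unfolding bnd_def by blast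
      then have "set w \<subseteq> L \<and> length w \<le> n - 1 + m"
        using Cons.IH[OF _ Cons.prems(2) h] unfolding bnd_def by blast
      then show ?thesis using aL n1 by auto
    next
      assume h: "shuffle_prod x (dl a y) w \<noteq> 0"
      then obtain w' where w': "y (a # w') \<noteq> 0"
        using dl_zero[of y a] shuffle_zero_right by metis
      then have aL: "a \<in> L" and n1: "m \<ge> 1" using Cons.prems(2) by fastforce+
      have "bnd L (m - 1) (dl a y)" using Cons.prems(2) bnd_dl unfolding bnd_def by blast
      then have "set w \<subseteq> L \<and> length w \<le> n + (m - 1)"
        using Cons.IH[OF Cons.prems(1) _ h] unfolding bnd_def by blast
      then show ?thesis using aL n1 by auto
    qed
  qed
qed

lemma fsupp_bnd: "fsupp x \<Longrightarrow> \<exists>L n. finite L \<and> bnd L n x"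
proof -
  assume f: "fsupp x"
  define W where "W = {w. x w \<noteq> 0}"
  have W: "finite W" using f unfolding fsupp_def W_def .
  show ?thesis
  proof (intro exI conjI)
    show "finite (\<Union>w\<in>W. set w)" using W by simp
    show "bnd (\<Union>w\<in>W. set w) (Max (length ` W)) x"
      unfolding bnd_def using W by (auto simp: W_def)
  qed
qed

lemma bnd_fsupp: "finite L \<Longrightarrow> bnd L n x \<Longrightarrow> fsupp x"
  unfolding fsupp_def bnd_def
  by (rule finite_subset[OF _ finite_lists_length_le[of L n]]) auto

lemma bnd_mono: "bnd L n x \<Longrightarrow> L \<subseteq> L' \<Longrightarrow> n \<le> n' \<Longrightarrow> bnd L' n' x"
  unfolding bnd_def by force

lemma fsupp_shuffle: "fsupp x \<Longrightarrow> fsupp y \<Longrightarrow> fsupp (shuffle_prod x y)"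
proof -
  assume "fsupp x" "fsupp y"
  then obtain L n L' n' where "finite L" "bnd L n x" "finite L'" "bnd L' n' y"
    using fsupp_bnd by metis
  then have "bnd (L \<union> L') n x" "bnd (L \<union> L') n' y" by (auto intro: bnd_mono)
  then have "bnd (L \<union> L') (n + n') (shuffle_prod x y)" by (rule shuffle_bnd)
  moreover have "finite (L \<union> L')" using \<open>finite L\<close> \<open>finite L'\<close> by simp
  ultimately show ?thesis using bnd_fsupp by blast
qed

definition letters :: "'a bar0 \<Rightarrow> 'a list set" where
  "letters x = {c. \<exists>w. x (c # w) \<noteq> 0}"

lemma finite_letters: "fsupp x \<Longrightarrow> finite (letters x)"
  unfolding fsupp_def letters_def
  by (rule finite_subset[of _ "hd ` {w. x w \<noteq> 0}"]) (auto simp: image_iff intro!: exI[where x="_ # _"])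

lemma shuffle_Cons_nz:
  assumes "shuffle_prod x y (c # v) \<noteq> 0" shows "c \<in> letters x \<union> letters y"
proof (rule ccontr)
  assume "c \<notin> letters x \<union> letters y"
  then have "dl c x = (\<lambda>_. 0)" "dl c y = (\<lambda>_. 0)" by (auto simp: letters_def dl_def fun_eq_iff)
  then show False using assms by (simp add: shuffle_Cons shuffle_zero_left shuffle_zero_right)
qed

lemma Symm_shuffle_Nil:
  assumes fx: "fsupp x" and fy: "fsupp y" and sx: "Symm x" and sy: "Symm y"
  shows "bar_d (shuffle_prod x y) [] a b v = bar_d (shuffle_prod x y) [] b a v"
proof -
  define L where "L = letters x \<union> letters y"
  have L: "finite L" unfolding L_def using fx fy finite_letters by blast
  have sub: "{c. shuffle_prod x y ([] @ c # v) \<noteq> 0} \<subseteq> L"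
    using shuffle_Cons_nz unfolding L_def by auto
  have subx: "\<And>w. {c. x ([] @ c # w) \<noteq> 0} \<subseteq> L" unfolding L_def letters_def by auto
  have suby: "\<And>w. {c. y ([] @ c # w) \<noteq> 0} \<subseteq> L" unfolding L_def letters_def by auto
  have key: "bar_d (shuffle_prod x y) [] a b v =
      shuffle_prod (\<lambda>w. bar_d x [] a b w) y v + shuffle_prod x (\<lambda>w. bar_d y [] a b w) v
      + (shuffle_prod (dl a x) (dl b y) v + shuffle_prod (dl b x) (dl a y) v)" for a b
  proof -
    have Ex: "(\<lambda>w. bar_d x [] a b w) = (\<lambda>w. x (a # b # w) - (\<Sum>c\<in>L. x (c # w) * of_nat (ncut c a b)))"
      using bar_d_alt[OF L subx] by simp
    have Ey: "(\<lambda>w. bar_d y [] a b w) = (\<lambda>w. y (a # b # w) - (\<Sum>c\<in>L. y (c # w) * of_nat (ncut c a b)))"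
      using bar_d_alt[OF L suby] by simp
    have "bar_d (shuffle_prod x y) [] a b v = shuffle_prod x y (a # b # v)
        - (\<Sum>c\<in>L. shuffle_prod x y (c # v) * of_nat (ncut c a b))"
      using bar_d_alt[OF L sub] by simp
    also have "shuffle_prod x y (a # b # v) =
       shuffle_prod (dl b (dl a x)) y v + shuffle_prod (dl a x) (dl b y) v +
      (shuffle_prod (dl b x) (dl a y) v + shuffle_prod x (dl b (dl a y)) v)"
      by (simp add: shuffle_Cons)
    also have "(\<Sum>c\<in>L. shuffle_prod x y (c # v) * of_nat (ncut c a b)) =
       (\<Sum>c\<in>L. shuffle_prod (\<lambda>w. x (c # w) * of_nat (ncut c a b)) y v) +
       (\<Sum>c\<in>L. shuffle_prod x (\<lambda>w. y (c # w) * of_nat (ncut c a b)) v)"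
      by (simp add: shuffle_Cons sum.distrib distrib_right dl_def
          shuffle_smult_left' shuffle_smult_right')
    also have "(\<Sum>c\<in>L. shuffle_prod (\<lambda>w. x (c # w) * of_nat (ncut c a b)) y v) =
        shuffle_prod (\<lambda>w. \<Sum>c\<in>L. x (c # w) * of_nat (ncut c a b)) y v"
      by (rule shuffle_sum_left[symmetric, OF L])
    also have "(\<Sum>c\<in>L. shuffle_prod x (\<lambda>w. y (c # w) * of_nat (ncut c a b)) v) =
        shuffle_prod x (\<lambda>w. \<Sum>c\<in>L. y (c # w) * of_nat (ncut c a b)) v"
      by (rule shuffle_sum_right[symmetric, OF L])
    finally show ?thesis
      unfolding Ex Ey shuffle_diff_left shuffle_diff_right by (simp add: dl_def)
  qed
  have "(\<lambda>w. bar_d x [] a b w) = (\<lambda>w. bar_d x [] b a w)" using sx unfolding Symm_def by simp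
  moreover have "(\<lambda>w. bar_d y [] a b w) = (\<lambda>w. bar_d y [] b a w)" using sy unfolding Symm_def by simp
  ultimately show ?thesis unfolding key by simp
qed

lemma Symm_shuffle:
  assumes "fsupp x" "fsupp y" "Symm x" "Symm y"
  shows "Symm (shuffle_prod x y)"
  unfolding Symm_def
proof (intro allI)
  fix u a b v
  show "bar_d (shuffle_prod x y) u a b v = bar_d (shuffle_prod x y) u b a v"
    using assms
  proof (induction u arbitrary: x y)
    case Nil then show ?case using Symm_shuffle_Nil by blast
  next
    case (Cons e u)
    have eq: "dl e (shuffle_prod x y) = (\<lambda>w. shuffle_prod (dl e x) y w + shuffle_prod x (dl e y) w)"
      by (simp add: dl_def fun_eq_iff shuffle_Cons)
    have f1: "fsupp (shuffle_prod (dl e x) y)" "fsupp (shuffle_prod x (dl e y))"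
      using Cons.prems fsupp_shuffle fsupp_dl by blast+
    have i1: "bar_d (shuffle_prod (dl e x) y) u a b v = bar_d (shuffle_prod (dl e x) y) u b a v"
      using Cons.IH[of "dl e x" y] Cons.prems fsupp_dl Symm_dl by blast
    have i2: "bar_d (shuffle_prod x (dl e y)) u a b v = bar_d (shuffle_prod x (dl e y)) u b a v"
      using Cons.IH[of x "dl e y"] Cons.prems fsupp_dl Symm_dl by blast
    show ?case unfolding bar_d_dl eq bar_d_add[OF f1] using i1 i2 by simp
  qed
qed



inductive_set cutsof :: "nat list \<Rightarrow> nat list list set" for r :: "nat list" where
  base: "[r] \<in> cutsof r"
| step: "c \<in> cutsof r \<Longrightarrow> k < length c \<Longrightarrow> (p, q) \<in> twocuts_idx (c ! k) \<Longrightarrow>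
         take k c @ [p, q] @ drop (Suc k) c \<in> cutsof r"

lemma cuts_idx_eq: "cuts_idx L = cutsof [0..<L]"
proof
  show "cuts_idx L \<subseteq> cutsof [0..<L]"
  proof
    fix c assume "c \<in> cuts_idx L" then show "c \<in> cutsof [0..<L]"
    proof induction
      case base then show ?case by (rule cutsof.base)
    next
      case (step c k p q) then show ?case using cutsof.step[of c "[0..<L]" k p q] by simp
    qed
  qed
  show "cutsof [0..<L] \<subseteq> cuts_idx L"
  proof
    fix c assume "c \<in> cutsof [0..<L]" then show "c \<in> cuts_idx L"
    proof induction
      case base then show ?case by (rule cuts_idx.base)
    next
      case (step c k p q) then show ?case using cuts_idx.step[of c L k p q] by simp
    qed
  qed
qed

definition cP :: "nat list \<Rightarrow> nat \<Rightarrow> nat \<Rightarrow> nat list" where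
  "cP r lo hi = filter (\<lambda>x. x \<le> lo \<or> hi \<le> x) r"

definition cQ :: "nat list \<Rightarrow> nat \<Rightarrow> nat \<Rightarrow> nat list" where
  "cQ r lo hi = filter (\<lambda>x. lo \<le> x \<and> x \<le> hi) r"

definition Cond :: "nat list \<Rightarrow> (nat \<times> nat) set" where
  "Cond r = {(lo, hi). lo \<in> set r \<and> hi \<in> set r \<and> lo < hi \<and> (\<exists>x\<in>set r. lo < x \<and> x < hi)
              \<and> (\<exists>x\<in>set r. x < lo \<or> hi < x)}"

lemma ss_less_iff:
  fixes r :: "nat list"
  assumes "sorted_wrt (<) r" "k < length r" "i < length r"
  shows "(r ! k < r ! i) = (k < i)"
proof (cases k i rule: linorder_cases)
  case less then show ?thesis using sorted_wrt_nth_less[OF assms(1) less assms(3)] by simp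
next
  case equal then show ?thesis by simp
next
  case greater then show ?thesis using sorted_wrt_nth_less[OF assms(1) greater assms(2)] by simp
qed

lemma ss_le_iff:
  fixes r :: "nat list"
  assumes "sorted_wrt (<) r" "k < length r" "i < length r"
  shows "(r ! k \<le> r ! i) = (k \<le> i)"
  using ss_less_iff[OF assms(1) assms(3) assms(2)] by linarith

lemma in_take_nth: "x \<in> set (take n r) \<Longrightarrow> \<exists>k. k < n \<and> k < length r \<and> x = r ! k"
  by (auto simp: in_set_conv_nth)

lemma in_drop_nth: "x \<in> set (drop n r) \<Longrightarrow> \<exists>k. n \<le> k \<and> k < length r \<and> x = r ! k"
proof -
  assume "x \<in> set (drop n r)"
  then obtain k' where "k' < length (drop n r)" "x = drop n r ! k'" by (auto simp: in_set_conv_nth)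
  then show ?thesis by (intro exI[of _ "n + k'"]) auto
qed

lemma split_P:
  assumes s: "sorted_wrt (<) r" and ij: "i < j" "Suc j < length r"
  shows "take (Suc i) r @ drop (Suc j) r = cP r (r ! i) (r ! Suc j)"
proof -
  have d: "drop (j - i) (drop (Suc i) r) = drop (Suc j) r" using ij by (simp add: drop_drop)
  have r: "r = take (Suc i) r @ take (j - i) (drop (Suc i) r) @ drop (Suc j) r"
    by (simp only: d[symmetric] append_take_drop_id)
  have 1: "filter (\<lambda>x. x \<le> r ! i \<or> r ! Suc j \<le> x) (take (Suc i) r) = take (Suc i) r"
  proof (rule filter_True, intro ballI)
    fix x assume "x \<in> set (take (Suc i) r)"
    from in_take_nth[OF this] obtain k where "k < Suc i" "k < length r" "x = r ! k" by blast
    then show "x \<le> r ! i \<or> r ! Suc j \<le> x" using ss_le_iff[OF s, of k i] ij by auto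
  qed
  have 2: "filter (\<lambda>x. x \<le> r ! i \<or> r ! Suc j \<le> x) (drop (Suc j) r) = drop (Suc j) r"
  proof (rule filter_True, intro ballI)
    fix x assume "x \<in> set (drop (Suc j) r)"
    from in_drop_nth[OF this] obtain k where "Suc j \<le> k" "k < length r" "x = r ! k" by blast
    then show "x \<le> r ! i \<or> r ! Suc j \<le> x" using ss_le_iff[OF s, of "Suc j" k] ij by auto
  qed
  have 3: "filter (\<lambda>x. x \<le> r ! i \<or> r ! Suc j \<le> x) (take (j - i) (drop (Suc i) r)) = []"
  proof (rule filter_False, intro ballI)
    fix x assume "x \<in> set (take (j - i) (drop (Suc i) r))"
    from in_take_nth[OF this] obtain k where k: "k < j - i" "k < length (drop (Suc i) r)" "x = drop (Suc i) r ! k"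
      by blast
    then have x: "x = r ! (Suc i + k)" "Suc i + k < length r" by auto
    show "\<not> (x \<le> r ! i \<or> r ! Suc j \<le> x)"
      using ss_le_iff[OF s, of "Suc i + k" i] ss_le_iff[OF s, of "Suc j" "Suc i + k"] ij x k(1) by auto
  qed
  show ?thesis unfolding cP_def by (subst (3) r) (simp only: filter_append 1 2 3 append_Nil)
qed

lemma split_Q:
  assumes s: "sorted_wrt (<) r" and ij: "i < j" "Suc j < length r"
  shows "take (j - i + 2) (drop i r) = cQ r (r ! i) (r ! Suc j)"
proof -
  have d: "drop (j - i + 2) (drop i r) = drop (j + 2) r" using ij by (simp add: drop_drop)
  have r: "r = take i r @ take (j - i + 2) (drop i r) @ drop (j + 2) r"
    by (simp only: d[symmetric] append_take_drop_id)
  have 1: "filter (\<lambda>x. r ! i \<le> x \<and> x \<le> r ! Suc j) (take i r) = []"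
  proof (rule filter_False, intro ballI)
    fix x assume "x \<in> set (take i r)"
    from in_take_nth[OF this] obtain k where "k < i" "k < length r" "x = r ! k" by blast
    then show "\<not> (r ! i \<le> x \<and> x \<le> r ! Suc j)" using ss_le_iff[OF s, of i k] ij by auto
  qed
  have 2: "filter (\<lambda>x. r ! i \<le> x \<and> x \<le> r ! Suc j) (drop (j + 2) r) = []"
  proof (rule filter_False, intro ballI)
    fix x assume "x \<in> set (drop (j + 2) r)"
    from in_drop_nth[OF this] obtain k where "j + 2 \<le> k" "k < length r" "x = r ! k" by blast
    then show "\<not> (r ! i \<le> x \<and> x \<le> r ! Suc j)" using ss_le_iff[OF s, of k "Suc j"] ij by auto
  qed
  have 3: "filter (\<lambda>x. r ! i \<le> x \<and> x \<le> r ! Suc j) (take (j - i + 2) (drop i r)) = take (j - i + 2) (drop i r)"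
  proof (rule filter_True, intro ballI)
    fix x assume "x \<in> set (take (j - i + 2) (drop i r))"
    from in_take_nth[OF this] obtain k where k: "k < j - i + 2" "k < length (drop i r)" "x = drop i r ! k"
      by blast
    then have x: "x = r ! (i + k)" "i + k < length r" by auto
    show "r ! i \<le> x \<and> x \<le> r ! Suc j"
      using ss_le_iff[OF s, of i "i + k"] ss_le_iff[OF s, of "i + k" "Suc j"] ij x k(1) by auto
  qed
  show ?thesis unfolding cQ_def by (subst (3) r) (simp only: filter_append 1 2 3 append_Nil append_Nil2)
qed


lemma TC:
  assumes s: "sorted_wrt (<) r"
  shows "twocuts_idx r = (\<lambda>(lo, hi). (cP r lo hi, cQ r lo hi)) ` Cond r"
proof
  show "twocuts_idx r \<subseteq> (\<lambda>(lo, hi). (cP r lo hi, cQ r lo hi)) ` Cond r"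
  proof
    fix t assume "t \<in> twocuts_idx r"
    then obtain i j where ij: "i < j" "j \<le> length r - 2" "(i, j) \<noteq> (0, length r - 2)"
      and t: "t = (take (i+1) r @ drop (j+1) r, take (j - i + 2) (drop i r))"
      unfolding twocuts_idx_def by blast
    have j: "Suc j < length r" using ij by linarith
    have t': "t = (cP r (r ! i) (r ! Suc j), cQ r (r ! i) (r ! Suc j))"
      using t split_P[OF s ij(1) j] split_Q[OF s ij(1) j] by simp
    have "(r ! i, r ! Suc j) \<in> Cond r"
      unfolding Cond_def
    proof (intro CollectI case_prodI conjI)
      show "r ! i \<in> set r" "r ! Suc j \<in> set r" using j ij by auto
      show "r ! i < r ! Suc j" using ss_less_iff[OF s, of i "Suc j"] j ij by auto
      show "\<exists>x\<in>set r. r ! i < x \<and> x < r ! Suc j"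
        using ss_less_iff[OF s, of i "Suc i"] ss_less_iff[OF s, of "Suc i" "Suc j"] j ij
        by (intro bexI[of _ "r ! Suc i"]) auto
      show "\<exists>x\<in>set r. x < r ! i \<or> r ! Suc j < x"
      proof (cases "i = 0")
        case True
        then have "Suc j < length r - 1" using ij j by auto
        then show ?thesis using ss_less_iff[OF s, of "Suc j" "length r - 1"] j
          by (intro bexI[of _ "r ! (length r - 1)"]) auto
      next
        case False
        have r0: "r \<noteq> []" using j by auto
        then show ?thesis using ss_less_iff[OF s, of 0 i] j ij False
          by (intro bexI[of _ "r ! 0"]) auto
      qed
    qed
    then show "t \<in> (\<lambda>(lo, hi). (cP r lo hi, cQ r lo hi)) ` Cond r" using t' by force
  qed
  show "(\<lambda>(lo, hi). (cP r lo hi, cQ r lo hi)) ` Cond r \<subseteq> twocuts_idx r"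
  proof
    fix t assume "t \<in> (\<lambda>(lo, hi). (cP r lo hi, cQ r lo hi)) ` Cond r"
    then obtain lh where "lh \<in> Cond r" "t = (\<lambda>(lo, hi). (cP r lo hi, cQ r lo hi)) lh" by blast
    then obtain lo hi where c: "(lo, hi) \<in> Cond r" and t: "t = (cP r lo hi, cQ r lo hi)"
      by (cases lh) auto
    from c have lo: "lo \<in> set r" and hi: "hi \<in> set r" and lh: "lo < hi"
      and w1: "\<exists>x\<in>set r. lo < x \<and> x < hi" and w2: "\<exists>x\<in>set r. x < lo \<or> hi < x"
      unfolding Cond_def by auto
    obtain i where i: "i < length r" "r ! i = lo" using lo by (auto simp: in_set_conv_nth)
    obtain i' where i': "i' < length r" "r ! i' = hi" using hi by (auto simp: in_set_conv_nth)
    obtain k where k: "k < length r" "lo < r ! k" "r ! k < hi" using w1 by (auto simp: in_set_conv_nth)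
    obtain k' where k': "k' < length r" "r ! k' < lo \<or> hi < r ! k'" using w2 by (auto simp: in_set_conv_nth)
    have ik: "i < k" using ss_less_iff[OF s i(1) k(1)] k i by simp
    have ki': "k < i'" using ss_less_iff[OF s k(1) i'(1)] k i' by simp
    define j where "j = i' - 1"
    have ij: "i < j" and j: "Suc j = i'" using ik ki' unfolding j_def by auto
    have jl: "j \<le> length r - 2" using i' j by linarith
    have ne: "(i, j) \<noteq> (0, length r - 2)"
    proof
      assume "(i, j) = (0, length r - 2)"
      then have "i = 0" "i' = length r - 1" using j i' by auto
      then show False using k' ss_less_iff[OF s k'(1) i(1)] ss_less_iff[OF s i'(1) k'(1)] i i' by auto
    qed
    have "t = (take (i+1) r @ drop (j+1) r, take (j - i + 2) (drop i r))"
      using t split_P[OF s ij] split_Q[OF s ij] i i' j by simp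
    then show "t \<in> twocuts_idx r" unfolding twocuts_idx_def using ij jl ne by blast
  qed
qed


lemma set_cP: "set (cP r lo hi) = {x \<in> set r. x \<le> lo \<or> hi \<le> x}"
  by (auto simp: cP_def)

lemma set_cQ: "set (cQ r lo hi) = {x \<in> set r. lo \<le> x \<and> x \<le> hi}"
  by (auto simp: cQ_def)

lemma sorted_cP: "sorted_wrt (<) r \<Longrightarrow> sorted_wrt (<) (cP r lo hi)"
  by (simp add: cP_def sorted_wrt_filter)

lemma sorted_cQ: "sorted_wrt (<) r \<Longrightarrow> sorted_wrt (<) (cQ r lo hi)"
  by (simp add: cQ_def sorted_wrt_filter)

lemma Cond_iff: "(lo, hi) \<in> Cond r \<longleftrightarrow> lo \<in> set r \<and> hi \<in> set r \<and> lo < hi \<and>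
   (\<exists>x\<in>set r. lo < x \<and> x < hi) \<and> (\<exists>x\<in>set r. x < lo \<or> hi < x)"
  by (simp add: Cond_def)

lemma finite_Cond: "finite (Cond r)"
  by (rule finite_subset[of _ "set r \<times> set r"]) (auto simp: Cond_def)

lemma length_cP: "(lo, hi) \<in> Cond r \<Longrightarrow> length (cP r lo hi) < length r"
  unfolding Cond_iff cP_def by (auto intro: length_filter_less)

lemma cQ_inj:
  assumes "(lo, hi) \<in> Cond r" "(lo', hi') \<in> Cond r" "cQ r lo hi = cQ r lo' hi'"
  shows "lo = lo' \<and> hi = hi'"
proof -
  have "set (cQ r lo hi) = set (cQ r lo' hi')" using assms(3) by simp
  then have "{x \<in> set r. lo \<le> x \<and> x \<le> hi} = {x \<in> set r. lo' \<le> x \<and> x \<le> hi'}"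
    by (simp add: set_cQ)
  moreover have "lo \<in> set r" "hi \<in> set r" "lo' \<in> set r" "hi' \<in> set r" "lo < hi" "lo' < hi'"
    using assms(1,2) by (auto simp: Cond_iff)
  ultimately show ?thesis by (metis (mono_tags, lifting) antisym mem_Collect_eq order_less_imp_le order_refl)
qed

lemma cP_cP: "cP (cP r lo hi) lo' hi' = filter (\<lambda>x. (x \<le> lo \<or> hi \<le> x) \<and> (x \<le> lo' \<or> hi' \<le> x)) r"
  by (simp add: cP_def)

lemma cQ_cP: "cQ (cP r lo hi) lo' hi' = filter (\<lambda>x. (x \<le> lo \<or> hi \<le> x) \<and> lo' \<le> x \<and> x \<le> hi') r"
  by (simp add: cP_def cQ_def)

lemma cP_cQ: "cP (cQ r lo hi) lo' hi' = filter (\<lambda>x. (lo \<le> x \<and> x \<le> hi) \<and> (x \<le> lo' \<or> hi' \<le> x)) r"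
  by (simp add: cP_def cQ_def)

lemma cQ_cQ: "cQ (cQ r lo hi) lo' hi' = filter (\<lambda>x. (lo \<le> x \<and> x \<le> hi) \<and> lo' \<le> x \<and> x \<le> hi') r"
  by (simp add: cQ_def)

lemma CondA:
  assumes "(lo, hi) \<in> Cond r" "(lo2, hi2) \<in> Cond (cQ r lo hi)"
  shows "(lo2, hi2) \<in> Cond r" "(lo, hi) \<in> Cond (cP r lo2 hi2)" "lo \<le> lo2" "hi2 \<le> hi"
proof -
  from assms(1) obtain x0 y0 where h1: "lo \<in> set r" "hi \<in> set r" "lo < hi" "x0 \<in> set r" "lo < x0" "x0 < hi"
    "y0 \<in> set r" "y0 < lo \<or> hi < y0" unfolding Cond_iff by blast
  from assms(2) obtain x1 y1 where h2: "lo2 \<in> set r" "lo \<le> lo2" "lo2 \<le> hi" "hi2 \<in> set r" "lo \<le> hi2" "hi2 \<le> hi"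
    "lo2 < hi2" "x1 \<in> set r" "lo2 < x1" "x1 < hi2" "y1 \<in> set r" "lo \<le> y1" "y1 \<le> hi"
    "y1 < lo2 \<or> hi2 < y1" unfolding Cond_iff set_cQ by blast
  show "lo \<le> lo2" "hi2 \<le> hi" using h2 by auto
  show "(lo2, hi2) \<in> Cond r" unfolding Cond_iff
    using h1 h2 by (intro conjI bexI[of _ x1] bexI[of _ y0]) auto
  show "(lo, hi) \<in> Cond (cP r lo2 hi2)" unfolding Cond_iff set_cP
  proof (intro conjI)
    show "\<exists>x\<in>{x \<in> set r. x \<le> lo2 \<or> hi2 \<le> x}. lo < x \<and> x < hi"
    proof (cases "y1 < lo2")
      case True
      then show ?thesis using h1 h2
        by (cases "lo < y1") (auto intro!: bexI[of _ y1] bexI[of _ lo2])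
    next
      case False
      then show ?thesis using h1 h2
        by (cases "y1 < hi") (auto intro!: bexI[of _ y1] bexI[of _ hi2])
    qed
  qed (use h1 h2 in auto)
qed

lemma CondB:
  assumes "(lo, hi) \<in> Cond r" "(lo', hi') \<in> Cond (cP r lo hi)" "lo' \<le> lo" "hi \<le> hi'"
  shows "(lo', hi') \<in> Cond r" "(lo, hi) \<in> Cond (cQ r lo' hi')"
proof -
  from assms(1) obtain x0 y0 where h1: "lo \<in> set r" "hi \<in> set r" "lo < hi" "x0 \<in> set r" "lo < x0" "x0 < hi"
    "y0 \<in> set r" "y0 < lo \<or> hi < y0" unfolding Cond_iff by blast
  from assms(2) obtain x1 y1 where h2: "lo' \<in> set r" "hi' \<in> set r"
    "lo' < hi'" "x1 \<in> set r" "x1 \<le> lo \<or> hi \<le> x1" "lo' < x1" "x1 < hi'" "y1 \<in> set r"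
    "y1 < lo' \<or> hi' < y1" unfolding Cond_iff set_cP by blast
  show "(lo', hi') \<in> Cond r" unfolding Cond_iff
    using h1 h2 assms(3,4) by (intro conjI bexI[of _ x0] bexI[of _ y1]) auto
  show "(lo, hi) \<in> Cond (cQ r lo' hi')" unfolding Cond_iff set_cQ
  proof (intro conjI)
    show "\<exists>x\<in>{x \<in> set r. lo' \<le> x \<and> x \<le> hi'}. x < lo \<or> hi < x"
    proof (cases "x1 \<le> lo")
      case True
      then show ?thesis using h1 h2 assms(3,4)
        by (cases "x1 = lo") (auto intro!: bexI[of _ x1] bexI[of _ lo'])
    next
      case False
      then show ?thesis using h1 h2 assms(3,4)
        by (cases "x1 = hi") (auto intro!: bexI[of _ x1] bexI[of _ hi'])
    qed
  qed (use h1 h2 assms(3,4) in auto)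
qed

lemma CondC:
  assumes "(lo, hi) \<in> Cond r" "(lo', hi') \<in> Cond (cP r lo hi)" "hi \<le> lo' \<or> hi' \<le> lo"
  shows "(lo', hi') \<in> Cond r" "(lo, hi) \<in> Cond (cP r lo' hi')"
proof -
  from assms(1) obtain x0 y0 where h1: "lo \<in> set r" "hi \<in> set r" "lo < hi" "x0 \<in> set r" "lo < x0" "x0 < hi"
    "y0 \<in> set r" "y0 < lo \<or> hi < y0" unfolding Cond_iff by blast
  from assms(2) obtain x1 y1 where h2: "lo' \<in> set r" "hi' \<in> set r"
    "lo' < hi'" "x1 \<in> set r" "x1 \<le> lo \<or> hi \<le> x1" "lo' < x1" "x1 < hi'" "y1 \<in> set r"
    "y1 < lo' \<or> hi' < y1" unfolding Cond_iff set_cP by blast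
  show "(lo', hi') \<in> Cond r" unfolding Cond_iff
  proof (intro conjI)
    show "\<exists>x\<in>set r. x < lo' \<or> hi' < x"
    proof (cases "hi \<le> lo'")
      case True then show ?thesis using h1 by (intro bexI[of _ lo]) auto
    next
      case False then show ?thesis using h1 assms(3) by (intro bexI[of _ hi]) auto
    qed
  qed (use h1 h2 in auto)
  show "(lo, hi) \<in> Cond (cP r lo' hi')" unfolding Cond_iff set_cP
  proof (intro conjI)
    show "\<exists>x\<in>{x \<in> set r. x \<le> lo' \<or> hi' \<le> x}. lo < x \<and> x < hi"
      using h1 assms(3) by (auto intro!: bexI[of _ x0])
    show "\<exists>x\<in>{x \<in> set r. x \<le> lo' \<or> hi' \<le> x}. x < lo \<or> hi < x"
    proof (cases "hi \<le> lo'")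
      case True then show ?thesis using h1 h2 by (intro bexI[of _ hi']) auto
    next
      case False then show ?thesis using h1 h2 assms(3) by (intro bexI[of _ lo']) auto
    qed
  qed (use h1 h2 assms(3) in auto)
qed

lemma CondD:
  assumes "(lo, hi) \<in> Cond r" "(lo', hi') \<in> Cond (cP r lo hi)"
  shows "(hi \<le> lo' \<or> hi' \<le> lo) \<or> (lo' \<le> lo \<and> hi \<le> hi')"
  using assms unfolding Cond_iff set_cP by auto


lemma cutsof_cong:
  assumes "c \<in> cutsof x" "u @ [x] @ v \<in> cutsof r"
  shows "u @ c @ v \<in> cutsof r"
  using assms(1)
proof induction
  case base then show ?case using assms(2) by simp
next
  case (step c k p q)
  have "take (length u + k) (u @ c @ v) @ [p, q] @ drop (Suc (length u + k)) (u @ c @ v) \<in> cutsof r"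
    by (rule cutsof.step[OF step.IH]) (use step.hyps in \<open>auto simp: nth_append\<close>)
  moreover have "take (length u + k) (u @ c @ v) = u @ take k c" using step.hyps by simp
  moreover have "drop (Suc (length u + k)) (u @ c @ v) = drop (Suc k) c @ v" using step.hyps by simp
  ultimately show ?case using step.hyps by simp
qed

lemma cutsof_nonempty: "c \<in> cutsof r \<Longrightarrow> c \<noteq> []"
  by (induction rule: cutsof.induct) auto

lemma rec_sup:
  assumes s: "sorted_wrt (<) r" and c: "(lo, hi) \<in> Cond r" and cc: "c \<in> cutsof (cP r lo hi)"
  shows "c @ [cQ r lo hi] \<in> cutsof r"
proof -
  have "(cP r lo hi, cQ r lo hi) \<in> twocuts_idx r" using TC[OF s] c by force
  then have "take 0 [r] @ [cP r lo hi, cQ r lo hi] @ drop (Suc 0) [r] \<in> cutsof r"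
    by (intro cutsof.step[OF cutsof.base]) auto
  then have "[] @ [cP r lo hi] @ [cQ r lo hi] \<in> cutsof r" by simp
  from cutsof_cong[OF cc this] show ?thesis by simp
qed

lemma rec_sub:
  assumes s: "sorted_wrt (<) r" and c: "c \<in> cutsof r"
  shows "c = [r] \<or> (\<exists>lo hi c0. (lo, hi) \<in> Cond r \<and> c0 \<in> cutsof (cP r lo hi) \<and> c = c0 @ [cQ r lo hi])"
  using c
proof induction
  case base then show ?case by simp
next
  case (step c k p q)
  from step.IH show ?case
  proof
    assume cr: "c = [r]"
    then have k: "k = 0" using step.hyps by simp
    then have "(p, q) \<in> twocuts_idx r" using step.hyps cr by simp
    then obtain lo hi where lh: "(lo, hi) \<in> Cond r" "p = cP r lo hi" "q = cQ r lo hi"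
      unfolding TC[OF s] by auto
    show ?case using lh cr k by (intro disjI2 exI[of _ lo] exI[of _ hi] exI[of _ "[p]"]) (auto intro: cutsof.base)
  next
    assume "\<exists>lo hi c0. (lo, hi) \<in> Cond r \<and> c0 \<in> cutsof (cP r lo hi) \<and> c = c0 @ [cQ r lo hi]"
    then obtain lo hi c0 where lh: "(lo, hi) \<in> Cond r" and c0: "c0 \<in> cutsof (cP r lo hi)"
      and ce: "c = c0 @ [cQ r lo hi]" by blast
    show ?case
    proof (cases "k < length c0")
      case True
      have "take k c0 @ [p, q] @ drop (Suc k) c0 \<in> cutsof (cP r lo hi)"
        by (rule cutsof.step[OF c0 True]) (use step.hyps ce True in \<open>simp add: nth_append\<close>)
      then show ?thesis using ce True lh
        by (intro disjI2 exI[of _ lo] exI[of _ hi] exI[of _ "take k c0 @ [p, q] @ drop (Suc k) c0"]) simp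
    next
      case False
      then have k: "k = length c0" using step.hyps ce by simp
      then have "(p, q) \<in> twocuts_idx (cQ r lo hi)" using step.hyps ce by simp
      then obtain lo2 hi2 where l2: "(lo2, hi2) \<in> Cond (cQ r lo hi)" "p = cP (cQ r lo hi) lo2 hi2"
        "q = cQ (cQ r lo hi) lo2 hi2"
        unfolding TC[OF sorted_cQ[OF s]] by auto
      note A = CondA[OF lh l2(1)]
      have q: "q = cQ r lo2 hi2" unfolding l2(3) cQ_cQ cQ_def[of r lo2 hi2]
        by (rule filter_cong[OF refl]) (use A(3,4) in auto)
      have P2: "cP (cP r lo2 hi2) lo hi = cP r lo hi" unfolding cP_cP cP_def[of r lo hi]
        by (rule filter_cong[OF refl]) (use A(3,4) in auto)
      have Q2: "cQ (cP r lo2 hi2) lo hi = p" unfolding l2(2) cQ_cP cP_cQ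
        by (rule filter_cong[OF refl]) auto
      have "c0 @ [p] \<in> cutsof (cP r lo2 hi2)"
        using rec_sup[OF sorted_cP[OF s] A(2)] c0 unfolding P2 Q2 by simp
      moreover have "take k c @ [p, q] @ drop (Suc k) c = (c0 @ [p]) @ [cQ r lo2 hi2]"
        using k ce q by simp
      ultimately show ?thesis using A(1) by blast
    qed
  qed
qed



lemma cutsof_sub:
  assumes "sorted_wrt (<) r"
  shows "cutsof r \<subseteq> insert [r] (\<Union>(lo, hi)\<in>Cond r. (\<lambda>c0. c0 @ [cQ r lo hi]) ` cutsof (cP r lo hi))"
  using rec_sub[OF assms] by fastforce

lemma finite_cutsof: "sorted_wrt (<) r \<Longrightarrow> finite (cutsof r)"
proof (induction "length r" arbitrary: r rule: less_induct)
  case less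
  have "finite (\<Union>(lo, hi)\<in>Cond r. (\<lambda>c0. c0 @ [cQ r lo hi]) ` cutsof (cP r lo hi))"
  proof (rule finite_UN_I[OF finite_Cond], clarify)
    fix lo hi assume "(lo, hi) \<in> Cond r"
    then have "finite (cutsof (cP r lo hi))"
      using less.hyps[OF length_cP] sorted_cP[OF less.prems] by blast
    then show "finite ((\<lambda>c0. c0 @ [cQ r lo hi]) ` cutsof (cP r lo hi))" by simp
  qed
  then show ?case using cutsof_sub[OF less.prems] by (meson finite_insert finite_subset)
qed

definition Tc :: "'a list \<Rightarrow> nat list \<Rightarrow> 'a bar0" where
  "Tc B r w = of_nat (card {c \<in> cutsof r. map (sym_of B) c = w})"

lemma T_eq_Tc: "T B = Tc B [0..<length B]"
  by (simp add: fun_eq_iff T_def Tc_def cuts_idx_eq)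

lemma Tc_snoc:
  assumes s: "sorted_wrt (<) r"
  shows "Tc B r (w @ [b]) = (if w = [] \<and> b = sym_of B r then 1 else 0) +
    (\<Sum>(lo, hi)\<in>Cond r. if sym_of B (cQ r lo hi) = b then Tc B (cP r lo hi) w else 0)"
proof -
  define X0 where "X0 = (if w = [] \<and> b = sym_of B r then {[r]} else {})"
  define Y where "Y = (\<lambda>(lo, hi). if sym_of B (cQ r lo hi) = b
      then (\<lambda>c0. c0 @ [cQ r lo hi]) ` {c0 \<in> cutsof (cP r lo hi). map (sym_of B) c0 = w} else {})"
  have fin: "finite {c0 \<in> cutsof (cP r lo hi). map (sym_of B) c0 = w}" for lo hi
    using finite_cutsof[OF sorted_cP[OF s]] by simp
  have eq: "{c \<in> cutsof r. map (sym_of B) c = w @ [b]} = X0 \<union> (\<Union>t\<in>Cond r. Y t)"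
  proof (intro equalityI subsetI)
    fix c assume "c \<in> {c \<in> cutsof r. map (sym_of B) c = w @ [b]}"
    then have c: "c \<in> cutsof r" "map (sym_of B) c = w @ [b]" by auto
    from rec_sub[OF s c(1)] show "c \<in> X0 \<union> (\<Union>t\<in>Cond r. Y t)"
    proof
      assume "c = [r]" then show ?thesis using c by (auto simp: X0_def)
    next
      assume "\<exists>lo hi c0. (lo, hi) \<in> Cond r \<and> c0 \<in> cutsof (cP r lo hi) \<and> c = c0 @ [cQ r lo hi]"
      then obtain lo hi c0 where "(lo, hi) \<in> Cond r" "c0 \<in> cutsof (cP r lo hi)" "c = c0 @ [cQ r lo hi]"
        by blast
      then show ?thesis using c by (auto simp: Y_def intro!: bexI[of _ "(lo, hi)"])
    qed
  next
    fix c assume "c \<in> X0 \<union> (\<Union>t\<in>Cond r. Y t)"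
    then show "c \<in> {c \<in> cutsof r. map (sym_of B) c = w @ [b]}"
    proof
      assume "c \<in> X0" then show ?thesis by (auto simp: X0_def sym_of_def intro: cutsof.base split: if_splits)
    next
      assume "c \<in> (\<Union>t\<in>Cond r. Y t)"
      then obtain lo hi where "(lo, hi) \<in> Cond r" "c \<in> Y (lo, hi)" by auto
      then show ?thesis using rec_sup[OF s] by (auto simp: Y_def split: if_splits)
    qed
  qed
  have d1: "X0 \<inter> (\<Union>t\<in>Cond r. Y t) = {}"
    using cutsof_nonempty by (fastforce simp: X0_def Y_def split: if_splits)
  have d2: "\<forall>t\<in>Cond r. \<forall>t'\<in>Cond r. t \<noteq> t' \<longrightarrow> Y t \<inter> Y t' = {}"
  proof (intro ballI impI)
    fix t t' assume h0: "t \<in> Cond r" "t' \<in> Cond r" "t \<noteq> t'"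
    obtain lo hi lo' hi' where tt: "t = (lo, hi)" "t' = (lo', hi')" by (cases t, cases t') auto
    show "Y t \<inter> Y t' = {}"
    proof (rule ccontr)
      assume "Y t \<inter> Y t' \<noteq> {}"
      then obtain c where "c \<in> Y (lo, hi)" "c \<in> Y (lo', hi')" using tt by auto
      then have "cQ r lo hi = cQ r lo' hi'" by (auto simp: Y_def split: if_splits)
      then show False using cQ_inj[of lo hi r lo' hi'] h0 tt by auto
    qed
  qed
  have finY: "\<forall>t\<in>Cond r. finite (Y t)" using fin by (auto simp: Y_def)
  have cardY: "card (Y (lo, hi)) = (if sym_of B (cQ r lo hi) = b then card {c0 \<in> cutsof (cP r lo hi). map (sym_of B) c0 = w} else 0)" for lo hi
    by (auto simp: Y_def card_image inj_on_def)
  have "card {c \<in> cutsof r. map (sym_of B) c = w @ [b]} = card X0 + (\<Sum>t\<in>Cond r. card (Y t))"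
    unfolding eq
    by (subst card_Un_disjoint) (use d1 finY finite_Cond in \<open>auto simp: X0_def card_UN_disjoint[OF finite_Cond finY d2]\<close>)
  also have "(\<Sum>t\<in>Cond r. card (Y t)) = (\<Sum>(lo, hi)\<in>Cond r. if sym_of B (cQ r lo hi) = b then card {c0 \<in> cutsof (cP r lo hi). map (sym_of B) c0 = w} else 0)"
    by (rule sum.cong) (auto simp: cardY)
  finally have "Tc B r (w @ [b]) = of_nat (card X0) + (\<Sum>(lo, hi)\<in>Cond r. of_nat (if sym_of B (cQ r lo hi) = b then card {c0 \<in> cutsof (cP r lo hi). map (sym_of B) c0 = w} else 0))"
    unfolding Tc_def of_nat_add of_nat_sum by (simp add: case_prod_beta)
  also have "\<dots> = (if w = [] \<and> b = sym_of B r then 1 else 0) +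
    (\<Sum>(lo, hi)\<in>Cond r. if sym_of B (cQ r lo hi) = b then Tc B (cP r lo hi) w else 0)"
    by (rule arg_cong2[where f="(+)"]) (auto simp: X0_def Tc_def intro!: sum.cong)
  finally show ?thesis .
qed



lemma twocuts_map:
  "twocuts_idx (map f p) = (\<lambda>(x, y). (map f x, map f y)) ` twocuts_idx p"
proof (intro equalityI subsetI)
  fix t assume "t \<in> twocuts_idx (map f p)"
  then obtain i j where ij: "i < j" "j \<le> length p - 2" "(i, j) \<noteq> (0, length p - 2)"
    and t: "t = (take (i+1) (map f p) @ drop (j+1) (map f p), take (j - i + 2) (drop i (map f p)))"
    unfolding twocuts_idx_def by auto
  have "(take (i+1) p @ drop (j+1) p, take (j - i + 2) (drop i p)) \<in> twocuts_idx p"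
    unfolding twocuts_idx_def using ij by blast
  moreover have "t = (\<lambda>(x, y). (map f x, map f y)) (take (i+1) p @ drop (j+1) p, take (j - i + 2) (drop i p))"
    using t by (simp add: take_map drop_map)
  ultimately show "t \<in> (\<lambda>(x, y). (map f x, map f y)) ` twocuts_idx p" by blast
next
  fix t assume "t \<in> (\<lambda>(x, y). (map f x, map f y)) ` twocuts_idx p"
  then obtain t0 where t0: "t0 \<in> twocuts_idx p" "t = (\<lambda>(x, y). (map f x, map f y)) t0" by blast
  then obtain i j where ij: "i < j" "j \<le> length p - 2" "(i, j) \<noteq> (0, length p - 2)"
    and t: "t0 = (take (i+1) p @ drop (j+1) p, take (j - i + 2) (drop i p))"
    unfolding twocuts_idx_def by auto
  have "t = (take (i+1) (map f p) @ drop (j+1) (map f p), take (j - i + 2) (drop i (map f p)))"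
    using t t0 by (simp add: take_map drop_map)
  then show "t \<in> twocuts_idx (map f p)" unfolding twocuts_idx_def using ij by auto
qed

lemma twocuts_sub: "(x, y) \<in> twocuts_idx p \<Longrightarrow> set x \<subseteq> set p \<and> set y \<subseteq> set p"
  unfolding twocuts_idx_def by (auto dest: in_set_takeD in_set_dropD)

lemma finite_twocuts: "finite (twocuts_idx p)"
proof -
  have "twocuts_idx p \<subseteq> (\<lambda>(i, j). (take (i+1) p @ drop (j+1) p, take (j - i + 2) (drop i p))) ` ({..length p} \<times> {..length p})"
    unfolding twocuts_idx_def by (auto simp: image_iff intro!: bexI[of _ "(_, _)"])
  then show ?thesis by (rule finite_subset) simp
qed

lemma card_filter_sum: "finite A \<Longrightarrow> (of_nat (card {t \<in> A. P t}) :: rat) = (\<Sum>t\<in>A. if P t then 1 else 0)"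
  by (simp add: sum.inter_filter[symmetric])

lemma ncut_eq:
  assumes s: "sorted_wrt (<) C"
  shows "(of_nat (ncut (sym_of B C) a b) :: rat) =
    (\<Sum>(l2, h2)\<in>Cond C. if sym_of B (cP C l2 h2) = a \<and> sym_of B (cQ C l2 h2) = b then 1 else 0)"
proof -
  define n where "n = length C"
  define pm where "pm = (\<lambda>(x::nat list, y::nat list). (map (\<lambda>i. C ! i) x, map (\<lambda>i. C ! i) y))"
  have Cm: "map (\<lambda>i. C ! i) [0..<n] = C" unfolding n_def by (rule map_nth)
  have tc: "twocuts_idx C = pm ` twocuts_idx [0..<n]"
    using twocuts_map[of "\<lambda>i. C ! i" "[0..<n]"] unfolding Cm pm_def .
  have dist: "distinct C" using s by (simp add: strict_sorted_iff)
  have inj: "inj_on pm (twocuts_idx [0..<n])"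
  proof (rule inj_onI)
    fix t t' assume t: "t \<in> twocuts_idx [0..<n]" "t' \<in> twocuts_idx [0..<n]" "pm t = pm t'"
    obtain x y x' y' where tt: "t = (x, y)" "t' = (x', y')" by (cases t, cases t')
    have sub: "set x \<subseteq> {..<n}" "set y \<subseteq> {..<n}" "set x' \<subseteq> {..<n}" "set y' \<subseteq> {..<n}"
      using twocuts_sub[of x y "[0..<n]"] twocuts_sub[of x' y' "[0..<n]"] t(1,2) tt by auto
    have injC: "inj_on (\<lambda>i. C ! i) {..<n}"
      using dist unfolding n_def by (simp add: inj_on_def nth_eq_iff_index_eq)
    have "map (\<lambda>i. C ! i) x = map (\<lambda>i. C ! i) x'" "map (\<lambda>i. C ! i) y = map (\<lambda>i. C ! i) y'"
      using t(3) tt by (auto simp: pm_def)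
    moreover have "inj_on (\<lambda>i. C ! i) (set x \<union> set x')" "inj_on (\<lambda>i. C ! i) (set y \<union> set y')"
      using injC sub by (auto intro: inj_on_subset)
    ultimately have "x = x'" "y = y'"
      using inj_on_map_eq_map[of "\<lambda>i. C ! i" "x" x'] inj_on_map_eq_map[of "\<lambda>i. C ! i" y y'] by auto
    then show "t = t'" using tt by simp
  qed
  have symsym: "sym_of (sym_of B C) x = sym_of B (map (\<lambda>i. C ! i) x)" if "set x \<subseteq> {..<n}" for x
    using that unfolding sym_of_def n_def by (auto simp: subset_iff)
  have "ncut (sym_of B C) a b = card {t \<in> twocuts_idx [0..<n]. sym_of B (fst (pm t)) = a \<and> sym_of B (snd (pm t)) = b}"
    unfolding ncut_def n_def[symmetric]
  proof (rule arg_cong[where f=card])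
    show "{(p, q). (p, q) \<in> twocuts_idx [0..<length (sym_of B C)] \<and> sym_of (sym_of B C) p = a \<and> sym_of (sym_of B C) q = b} =
      {t \<in> twocuts_idx [0..<n]. sym_of B (fst (pm t)) = a \<and> sym_of B (snd (pm t)) = b}"
      using twocuts_sub symsym by (auto simp: sym_of_def n_def pm_def) (metis (no_types, lifting) atLeast_upt lessThan_iff set_upt subset_iff)+
  qed
  also have "\<dots> = card (pm ` {t \<in> twocuts_idx [0..<n]. sym_of B (fst (pm t)) = a \<and> sym_of B (snd (pm t)) = b})"
    by (rule card_image[symmetric]) (rule inj_on_subset[OF inj], auto)
  also have "pm ` {t \<in> twocuts_idx [0..<n]. sym_of B (fst (pm t)) = a \<and> sym_of B (snd (pm t)) = b}
     = {t \<in> twocuts_idx C. sym_of B (fst t) = a \<and> sym_of B (snd t) = b}"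
    unfolding tc by auto
  finally have "(of_nat (ncut (sym_of B C) a b) :: rat) = (\<Sum>t\<in>twocuts_idx C. if sym_of B (fst t) = a \<and> sym_of B (snd t) = b then 1 else 0)"
    using card_filter_sum[OF finite_twocuts] by simp
  also have "\<dots> = (\<Sum>(l2, h2)\<in>Cond C. if sym_of B (cP C l2 h2) = a \<and> sym_of B (cQ C l2 h2) = b then 1 else 0)"
    unfolding TC[OF s]
  proof (subst sum.reindex)
    show "inj_on (\<lambda>(lo, hi). (cP C lo hi, cQ C lo hi)) (Cond C)"
      by (rule inj_onI) (use cQ_inj in \<open>auto simp: case_prod_beta\<close>)
  qed (simp add: case_prod_beta o_def)
  finally show ?thesis .
qed



lemma Tc_Nil: "Tc B r [] = 0"
  using cutsof_nonempty by (auto simp: Tc_def)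

lemma fsupp_Tc: "sorted_wrt (<) r \<Longrightarrow> fsupp (Tc B r)"
  unfolding fsupp_def
  by (rule finite_subset[of _ "map (sym_of B) ` cutsof r"]) (auto simp: Tc_def finite_cutsof)

lemma filter_eq_on: "(\<And>x. P x = Q x) \<Longrightarrow> filter P r = filter Q r"
  by (rule filter_cong) auto

lemma sum_Sigma2:
  assumes "finite A" "\<And>x. x \<in> A \<Longrightarrow> finite (Bf x)"
  shows "(\<Sum>x\<in>A. \<Sum>y\<in>Bf x. g (x, y)) = sum g (Sigma A Bf)"
  using sum.Sigma[OF assms(1), of Bf "\<lambda>x y. g (x, y)"] assms(2) by simp

definition sw :: "('x \<times> 'y) \<Rightarrow> ('y \<times> 'x)" where "sw t = (snd t, fst t)"

lemma Tc_base_split: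
  fixes B :: "'a list" and u :: "'a list list"
  assumes s: "sorted_wrt (<) r"
  defines "N \<equiv> Cond r"
  defines "D1 \<equiv> Sigma N (\<lambda>(lo, hi). Cond (cP r lo hi))"
  defines "D2 \<equiv> Sigma N (\<lambda>(lo, hi). Cond (cQ r lo hi))"
  defines "f \<equiv> \<lambda>a b ((lo, hi), (l', h')). if sym_of B (cQ r lo hi) = b \<and> sym_of B (cQ (cP r lo hi) l' h') = a
      then Tc B (cP (cP r lo hi) l' h') u else 0"
  defines "g \<equiv> \<lambda>a b ((lo, hi), (l2, h2)). if sym_of B (cP (cQ r lo hi) l2 h2) = a \<and> sym_of B (cQ (cQ r lo hi) l2 h2) = b
      then Tc B (cP r lo hi) u else 0"
  shows "bar_d (Tc B r) u a b [] = sum (f a b) D1 - sum (g a b) D2"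
proof -
  have fN: "finite N" unfolding N_def by (rule finite_Cond)
  define S where "S = insert (sym_of B r) ((\<lambda>(lo, hi). sym_of B (cQ r lo hi)) ` N) \<union> {c. Tc B r (u @ c # []) \<noteq> 0}"
  have fS: "finite S" unfolding S_def using fN fsupp_mid[OF fsupp_Tc[OF s]] by auto
  have "bar_d (Tc B r) u a b [] = Tc B r (u @ [a, b]) - (\<Sum>c\<in>S. Tc B r (u @ [c]) * of_nat (ncut c a b))"
    using bar_d_alt[OF fS, of "Tc B r" u "[]" a b] unfolding S_def by auto
  also have "Tc B r (u @ [a, b]) = (\<Sum>(lo, hi)\<in>N. if sym_of B (cQ r lo hi) = b \<and> u = [] \<and> a = sym_of B (cP r lo hi) then 1 else 0)
      + sum (f a b) D1"
  proof -
    have "Tc B r (u @ [a, b]) = Tc B r ((u @ [a]) @ [b])" by simp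
    also have "\<dots> = (\<Sum>(lo, hi)\<in>N. if sym_of B (cQ r lo hi) = b then Tc B (cP r lo hi) (u @ [a]) else 0)"
      unfolding Tc_snoc[OF s] N_def by simp
    also have "\<dots> = (\<Sum>(lo, hi)\<in>N. (if sym_of B (cQ r lo hi) = b \<and> u = [] \<and> a = sym_of B (cP r lo hi) then 1 else 0)
         + (\<Sum>(l', h')\<in>Cond (cP r lo hi). f a b ((lo, hi), (l', h'))))"
      unfolding Tc_snoc[OF sorted_cP[OF s]] f_def
      by (rule sum.cong[OF refl]) (auto simp: sum.distrib if_distrib cong: if_cong intro!: sum.cong)
    also have "\<dots> = (\<Sum>(lo, hi)\<in>N. if sym_of B (cQ r lo hi) = b \<and> u = [] \<and> a = sym_of B (cP r lo hi) then 1 else 0)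
      + sum (f a b) D1"
    proof -
      have e1: "(\<Sum>(lo, hi)\<in>N. \<Sum>(l', h')\<in>Cond (cP r lo hi). f a b ((lo, hi), (l', h'))) =
          (\<Sum>x\<in>N. \<Sum>y\<in>(\<lambda>(lo, hi). Cond (cP r lo hi)) x. f a b (x, y))"
        by (auto simp: case_prod_beta)
      also have "\<dots> = sum (f a b) D1" unfolding D1_def
        by (rule sum_Sigma2[OF fN]) (auto simp: finite_Cond)
      finally have e2: "(\<Sum>(lo, hi)\<in>N. \<Sum>(l', h')\<in>Cond (cP r lo hi). f a b ((lo, hi), (l', h'))) = sum (f a b) D1" .
      show ?thesis unfolding e2[symmetric] by (simp add: sum.distrib case_prod_beta)
    qed
    finally show ?thesis .
  qed
  also have "(\<Sum>c\<in>S. Tc B r (u @ [c]) * of_nat (ncut c a b)) =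
     (if u = [] then of_nat (ncut (sym_of B r) a b) else 0) + sum (g a b) D2"
  proof -
    have "(\<Sum>c\<in>S. Tc B r (u @ [c]) * of_nat (ncut c a b)) =
      (\<Sum>c\<in>S. (if u = [] \<and> c = sym_of B r then of_nat (ncut c a b) else 0)) +
      (\<Sum>c\<in>S. \<Sum>(lo, hi)\<in>N. if sym_of B (cQ r lo hi) = c then Tc B (cP r lo hi) u * of_nat (ncut c a b) else 0)"
      unfolding sum.distrib[symmetric]
    proof (rule sum.cong[OF refl])
      fix c
      show "Tc B r (u @ [c]) * of_nat (ncut c a b) =
         (if u = [] \<and> c = sym_of B r then of_nat (ncut c a b) else 0) +
         (\<Sum>(lo, hi)\<in>N. if sym_of B (cQ r lo hi) = c then Tc B (cP r lo hi) u * of_nat (ncut c a b) else 0)"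
        unfolding Tc_snoc[OF s] N_def distrib_right sum_distrib_right
        by (auto simp: case_prod_beta intro!: sum.cong)
    qed
    also have "(\<Sum>c\<in>S. (if u = [] \<and> c = sym_of B r then of_nat (ncut c a b) else 0)) =
       (if u = [] then of_nat (ncut (sym_of B r) a b) else 0)"
      using fS by (auto simp: S_def)
    also have "(\<Sum>c\<in>S. \<Sum>(lo, hi)\<in>N. if sym_of B (cQ r lo hi) = c then Tc B (cP r lo hi) u * of_nat (ncut c a b) else 0)
       = (\<Sum>(lo, hi)\<in>N. Tc B (cP r lo hi) u * of_nat (ncut (sym_of B (cQ r lo hi)) a b))"
    proof (subst sum.swap, rule sum.cong[OF refl])
      fix t assume t: "t \<in> N"
      obtain lo hi where tt: "t = (lo, hi)" by (cases t)
      have "sym_of B (cQ r lo hi) \<in> S" using t tt by (auto simp: S_def)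
      then show "(\<Sum>c\<in>S. case t of (lo, hi) \<Rightarrow> if sym_of B (cQ r lo hi) = c then Tc B (cP r lo hi) u * of_nat (ncut c a b) else 0)
         = (case t of (lo, hi) \<Rightarrow> Tc B (cP r lo hi) u * of_nat (ncut (sym_of B (cQ r lo hi)) a b))"
        unfolding tt using fS by (simp add: sum.delta)
    qed
    also have "\<dots> = sum (g a b) D2"
    proof -
      have e0: "(\<Sum>(lo, hi)\<in>N. Tc B (cP r lo hi) u * of_nat (ncut (sym_of B (cQ r lo hi)) a b)) =
          (\<Sum>(lo, hi)\<in>N. \<Sum>(l2, h2)\<in>Cond (cQ r lo hi). g a b ((lo, hi), (l2, h2)))"
      proof (rule sum.cong[OF refl], clarify)
        fix lo hi
        show "Tc B (cP r lo hi) u * of_nat (ncut (sym_of B (cQ r lo hi)) a b) =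
          (\<Sum>(l2, h2)\<in>Cond (cQ r lo hi). g a b ((lo, hi), (l2, h2)))"
          unfolding ncut_eq[OF sorted_cQ[OF s]] sum_distrib_left g_def
          by (rule sum.cong[OF refl]) auto
      qed
      have e1: "(\<Sum>(lo, hi)\<in>N. \<Sum>(l2, h2)\<in>Cond (cQ r lo hi). g a b ((lo, hi), (l2, h2))) =
          (\<Sum>x\<in>N. \<Sum>y\<in>(\<lambda>(lo, hi). Cond (cQ r lo hi)) x. g a b (x, y))"
        by (auto simp: case_prod_beta)
      also have "\<dots> = sum (g a b) D2" unfolding D2_def
        by (rule sum_Sigma2[OF fN]) (auto simp: finite_Cond)
      finally show ?thesis using e0 by simp
    qed
    finally show ?thesis .
  qed
  also have "(\<Sum>(lo, hi)\<in>N. if sym_of B (cQ r lo hi) = b \<and> u = [] \<and> a = sym_of B (cP r lo hi) then 1 else 0)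
     = (if u = [] then of_nat (ncut (sym_of B r) a b) else (0::rat))"
    unfolding ncut_eq[OF s] N_def by (auto intro!: sum.cong)
  finally show ?thesis by simp
qed


lemma Tc_base:
  fixes B :: "'a list" and u :: "'a list list"
  assumes s: "sorted_wrt (<) r"
  shows "bar_d (Tc B r) u a b [] = bar_d (Tc B r) u b a []"
proof -
  define N where "N = Cond r"
  define D1 where "D1 = Sigma N (\<lambda>(lo, hi). Cond (cP r lo hi))"
  define D2 where "D2 = Sigma N (\<lambda>(lo, hi). Cond (cQ r lo hi))"
  define f where "f = (\<lambda>a b ((lo, hi), (l', h')). if sym_of B (cQ r lo hi) = b \<and> sym_of B (cQ (cP r lo hi) l' h') = a
      then Tc B (cP (cP r lo hi) l' h') u else (0::rat))"
  define g where "g = (\<lambda>a b ((lo, hi), (l2, h2)). if sym_of B (cP (cQ r lo hi) l2 h2) = a \<and> sym_of B (cQ (cQ r lo hi) l2 h2) = b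
      then Tc B (cP r lo hi) u else (0::rat))"
  define ind where "ind = (\<lambda>((lo::nat, hi::nat), (l'::nat, h'::nat)). hi \<le> l' \<or> h' \<le> lo)"
  have split: "bar_d (Tc B r) u a b [] = sum (f a b) D1 - sum (g a b) D2" for a b
    using Tc_base_split[OF s, of B u a b] unfolding N_def D1_def D2_def f_def g_def by simp
  have fN: "finite N" unfolding N_def by (rule finite_Cond)
  have fD1: "finite D1" unfolding D1_def using fN by (auto simp: finite_Cond)
  have memD1: "((lo, hi), (l', h')) \<in> D1 \<longleftrightarrow> (lo, hi) \<in> Cond r \<and> (l', h') \<in> Cond (cP r lo hi)" for lo hi l' h'
    by (simp add: D1_def N_def)
  have memD2: "((lo, hi), (l', h')) \<in> D2 \<longleftrightarrow> (lo, hi) \<in> Cond r \<and> (l', h') \<in> Cond (cQ r lo hi)" for lo hi l' h'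
    by (simp add: D2_def N_def)
  have part: "sum h D1 = sum h {x \<in> D1. ind x} + sum h {x \<in> D1. \<not> ind x}" for h :: "_ \<Rightarrow> rat"
  proof -
    have "sum h D1 = sum h ({x \<in> D1. ind x} \<union> {x \<in> D1. \<not> ind x})"
      by (rule arg_cong[where f="sum h"]) auto
    also have "\<dots> = sum h {x \<in> D1. ind x} + sum h {x \<in> D1. \<not> ind x}"
      by (rule sum.union_disjoint) (use fD1 in auto)
    finally show ?thesis .
  qed
  have NI: "sum (f a b) {x \<in> D1. \<not> ind x} = sum (g a b) D2" for a b
  proof (rule sum.reindex_bij_witness[where i=sw and j=sw])
    fix x assume x: "x \<in> {x \<in> D1. \<not> ind x}"
    then obtain lo hi l' h' where xx: "x = ((lo, hi), (l', h'))" by (metis prod.exhaust)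
    have c1: "(lo, hi) \<in> Cond r" "(l', h') \<in> Cond (cP r lo hi)" and ni: "\<not> (hi \<le> l' \<or> h' \<le> lo)"
      using x by (auto simp: xx memD1 ind_def)
    have nest: "l' \<le> lo" "hi \<le> h'" using CondD[OF c1] ni by auto
    note B2 = CondB[OF c1 nest]
    show "sw (sw x) = x" by (simp add: sw_def)
    show "sw x \<in> D2" using B2 by (simp add: xx sw_def memD2)
    have lh: "lo < hi" using c1(1) by (simp add: Cond_iff)
    have e1: "cP (cQ r l' h') lo hi = cQ (cP r lo hi) l' h'"
      unfolding cP_cQ cQ_cP by (rule filter_eq_on) auto
    have e2: "cQ (cQ r l' h') lo hi = cQ r lo hi"
      unfolding cQ_cQ cQ_def[of r lo hi] by (rule filter_eq_on) (use nest in auto)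
    have e3: "cP r l' h' = cP (cP r lo hi) l' h'"
      unfolding cP_cP cP_def[of r l' h'] by (rule filter_eq_on) (use nest lh in auto)
    show "g a b (sw x) = f a b x"
      unfolding xx sw_def g_def f_def by (simp add: e1 e2 e3 conj_commute)
  next
    fix y assume y: "y \<in> D2"
    then obtain l' h' lo hi where yy: "y = ((l', h'), (lo, hi))" by (metis prod.exhaust)
    have c2: "(l', h') \<in> Cond r" "(lo, hi) \<in> Cond (cQ r l' h')" using y by (auto simp: yy memD2)
    note A2 = CondA[OF c2]
    have lh: "lo < hi" using A2(1) by (simp add: Cond_iff)
    show "sw (sw y) = y" by (simp add: sw_def)
    show "sw y \<in> {x \<in> D1. \<not> ind x}"
      using A2 lh by (auto simp: yy sw_def memD1 ind_def)
  qed
  have swI: "sw x \<in> {x \<in> D1. ind x}" if x: "x \<in> {x \<in> D1. ind x}" for x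
  proof -
    obtain lo hi l' h' where xx: "x = ((lo, hi), (l', h'))" by (metis prod.exhaust)
    have c1: "(lo, hi) \<in> Cond r" "(l', h') \<in> Cond (cP r lo hi)" and id: "hi \<le> l' \<or> h' \<le> lo"
      using x by (auto simp: xx memD1 ind_def)
    note C2 = CondC[OF c1 id]
    show "sw x \<in> {x \<in> D1. ind x}" using C2 id by (auto simp: xx sw_def memD1 ind_def)
  qed
  have IND: "sum (f a b) {x \<in> D1. ind x} = sum (f b a) {x \<in> D1. ind x}" for a b
  proof (rule sum.reindex_bij_witness[where i=sw and j=sw])
    fix y assume "y \<in> {x \<in> D1. ind x}"
    then show "sw (sw y) = y" "sw y \<in> {x \<in> D1. ind x}" using swI by (auto simp: sw_def)
  next
    fix x assume x: "x \<in> {x \<in> D1. ind x}"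
    then obtain lo hi l' h' where xx: "x = ((lo, hi), (l', h'))" by (metis prod.exhaust)
    have c1: "(lo, hi) \<in> Cond r" "(l', h') \<in> Cond (cP r lo hi)" and id: "hi \<le> l' \<or> h' \<le> lo"
      using x by (auto simp: xx memD1 ind_def)
    note C2 = CondC[OF c1 id]
    have lh: "lo < hi" using c1(1) by (simp add: Cond_iff)
    have lh': "l' < h'" using C2(1) by (simp add: Cond_iff)
    show "sw (sw x) = x" by (simp add: sw_def)
    show "sw x \<in> {x \<in> D1. ind x}" using C2 id by (auto simp: xx sw_def memD1 ind_def)
    have e1: "cQ (cP r lo hi) l' h' = cQ r l' h'"
      unfolding cQ_cP cQ_def[of r l' h'] by (rule filter_eq_on) (use id lh lh' in auto)
    have e2: "cQ (cP r l' h') lo hi = cQ r lo hi"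
      unfolding cQ_cP cQ_def[of r lo hi] by (rule filter_eq_on) (use id lh lh' in auto)
    have e3: "cP (cP r l' h') lo hi = cP (cP r lo hi) l' h'"
      unfolding cP_cP by (rule filter_eq_on) auto
    show "f b a (sw x) = f a b x"
      unfolding xx sw_def f_def by (simp add: e1 e2 e3 conj_commute)
  qed
  show ?thesis unfolding split part NI IND by simp
qed


definition dr :: "'a list \<Rightarrow> 'a bar0 \<Rightarrow> 'a bar0" where
  "dr e x = (\<lambda>w. x (w @ [e]))"

lemma bar_d_dr: "bar_d x u a b (v @ [e]) = bar_d (dr e x) u a b v"
  by (simp add: bar_d_def dr_def)

lemma bar_d_zero: "bar_d (\<lambda>_. 0) u a b v = 0"
  by (simp add: bar_d_def)

lemma bar_d_delta: "bar_d (\<lambda>w. if w = [] \<and> P then k else 0) u a b v = 0"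
  by (simp add: bar_d_def)

lemma Symm_Tc:
  assumes s: "sorted_wrt (<) r"
  shows "Symm (Tc B r)"
  unfolding Symm_def
proof (intro allI)
  fix u a b v
  show "bar_d (Tc B r) u a b v = bar_d (Tc B r) u b a v"
    using s
  proof (induction v arbitrary: r rule: rev_induct)
    case Nil then show ?case by (rule Tc_base)
  next
    case (snoc e v)
    define F where "F = (\<lambda>(lo, hi). if sym_of B (cQ r lo hi) = e then Tc B (cP r lo hi) else (\<lambda>_. 0))"
    define dlt where "dlt = (\<lambda>w::'a list list. if w = [] \<and> e = sym_of B r then 1 else (0::rat))"
    have eq: "dr e (Tc B r) = (\<lambda>w. dlt w + (\<Sum>t\<in>Cond r. F t w))"
      unfolding dr_def dlt_def F_def fun_eq_iff Tc_snoc[OF snoc.prems]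
      by (auto simp: case_prod_beta intro!: sum.cong)
    have fF: "fsupp (F t)" if "t \<in> Cond r" for t
      using fsupp_Tc[OF sorted_cP[OF snoc.prems]] by (auto simp: F_def fsupp_def case_prod_beta)
    have fd: "fsupp dlt" unfolding fsupp_def dlt_def
      by (rule finite_subset[of _ "{[]}"]) auto
    have bd: "bar_d (dr e (Tc B r)) u a b v = (\<Sum>t\<in>Cond r. bar_d (F t) u a b v)" for a b
    proof -
      have "bar_d (dr e (Tc B r)) u a b v = bar_d dlt u a b v + bar_d (\<lambda>w. \<Sum>t\<in>Cond r. F t w) u a b v"
        unfolding eq by (rule bar_d_add[OF fd fsupp_sum[OF finite_Cond fF]])
      also have "bar_d dlt u a b v = 0" unfolding dlt_def by (rule bar_d_delta)
      also have "bar_d (\<lambda>w. \<Sum>t\<in>Cond r. F t w) u a b v = (\<Sum>t\<in>Cond r. bar_d (F t) u a b v)"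
        by (rule bar_d_sum[OF finite_Cond fF])
      finally show ?thesis by simp
    qed
    have "bar_d (F t) u a b v = bar_d (F t) u b a v" if "t \<in> Cond r" for t
      using snoc.IH[OF sorted_cP[OF snoc.prems]] by (auto simp: F_def case_prod_beta bar_d_zero)
    then show ?case unfolding bar_d_dr bd by (rule sum.cong[OF refl])
  qed
qed



definition mu :: "'a list list \<Rightarrow> nat" where
  "mu w = sum_list (map (\<lambda>e. length e - 2) w)"

lemma twocuts_len:
  assumes "(p, q) \<in> twocuts_idx e"
  shows "length p + length q = length e + 2" "length p \<ge> 3" "length q \<ge> 3"
proof -
  from assms obtain i j where ij: "i < j" "j \<le> length e - 2" "(i, j) \<noteq> (0, length e - 2)"
    and t: "p = take (i+1) e @ drop (j+1) e" "q = take (j - i + 2) (drop i e)"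
    unfolding twocuts_idx_def by blast
  have lp: "length p = (i + 1) + (length e - (j + 1))" using t ij by auto
  have lq: "length q = j - i + 2" using t ij by auto
  show "length p + length q = length e + 2" using lp lq ij by auto
  show "length p \<ge> 3" using lp ij by (cases "i = 0") auto
  show "length q \<ge> 3" using lq ij by auto
qed

lemma cutsof_len:
  assumes "c \<in> cutsof r" "length r \<ge> 3"
  shows "(\<forall>e\<in>set c. length e \<ge> 3) \<and> sum_list (map (\<lambda>e. length e - 2) c) = length r - 2"
  using assms(1)
proof induction
  case base then show ?case using assms(2) by simp
next
  case (step c k p q)
  have ck: "c = take k c @ [c ! k] @ drop (Suc k) c" using step.hyps(2) by (simp add: id_take_nth_drop)
  have l: "length p + length q = length (c ! k) + 2" "length p \<ge> 3" "length q \<ge> 3"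
    using twocuts_len[OF step.hyps(3)] by auto
  have sk: "set (take k c) \<subseteq> set c" "set (drop (Suc k) c) \<subseteq> set c" "c ! k \<in> set c"
    using step.hyps(2) by (auto dest: in_set_takeD in_set_dropD)
  have s1: "\<forall>e\<in>set (take k c @ [p, q] @ drop (Suc k) c). 3 \<le> length e"
    using step.IH sk l by auto
  have "sum_list (map (\<lambda>e. length e - 2) c) = sum_list (map (\<lambda>e. length e - 2) (take k c)) + (length (c ! k) - 2)
     + sum_list (map (\<lambda>e. length e - 2) (drop (Suc k) c))"
    by (subst ck) simp
  then show ?case using step.IH s1 l by simp
qed

lemma cutsof_map: "c \<in> cutsof p \<Longrightarrow> map (map f) c \<in> cutsof (map f p)"
proof (induction rule: cutsof.induct)
  case base then show ?case using cutsof.base by fastforce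
next
  case (step c k p' q)
  have "(map f p', map f q) \<in> twocuts_idx (map (map f) c ! k)"
    using step.hyps twocuts_map[of f "c ! k"] by force
  from cutsof.step[OF step.IH _ this] step.hyps show ?case by (simp add: take_map drop_map)
qed

lemma cutsof_sub_set: "c \<in> cutsof r \<Longrightarrow> e \<in> set c \<Longrightarrow> set e \<subseteq> set r"
proof (induction arbitrary: e rule: cutsof.induct)
  case base then show ?case by simp
next
  case (step c k p q)
  have "set p \<subseteq> set (c ! k)" "set q \<subseteq> set (c ! k)" using twocuts_sub[OF step.hyps(3)] by auto
  moreover have "c ! k \<in> set c" using step.hyps(2) by simp
  ultimately show ?case using step.prems step.IH by (auto dest: in_set_takeD in_set_dropD)
qed

lemma finite_pieces: "finite (pieces A)"
proof -
  have "pieces A \<subseteq> sym_of A ` (\<Union>c\<in>cutsof [0..<length A]. set c)"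
    unfolding pieces_def cuts_idx_eq by auto
  moreover have "finite (cutsof [0..<length A])" by (rule finite_cutsof) simp
  ultimately show ?thesis by (meson finite_UN_I finite_imageI finite_set finite_subset)
qed

lemma pieces_len:
  assumes "length A \<ge> 3" "B \<in> pieces A" shows "length B \<ge> 3"
proof -
  from assms(2) obtain c q where "c \<in> cutsof [0..<length A]" "q \<in> set c" "B = sym_of A q"
    unfolding pieces_def cuts_idx_eq by auto
  then show ?thesis using cutsof_len[of c "[0..<length A]"] assms(1) by (auto simp: sym_of_def)
qed

lemma pieces_of_pieces:
  assumes B: "B \<in> pieces A" and c: "c \<in> cutsof [0..<length B]" and e: "e \<in> set c"
  shows "sym_of B e \<in> pieces A"
proof -
  from B obtain c0 q where c0: "c0 \<in> cutsof [0..<length A]" "q \<in> set c0" and Bq: "B = sym_of A q"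
    unfolding pieces_def cuts_idx_eq by auto
  have n: "length B = length q" using Bq by (simp add: sym_of_def)
  obtain k where k: "k < length c0" "c0 ! k = q" using c0(2) by (auto simp: in_set_conv_nth)
  have c0e: "take k c0 @ [q] @ drop (Suc k) c0 \<in> cutsof [0..<length A]"
    using c0(1) k id_take_nth_drop[OF k(1)] by simp
  have qm: "map (\<lambda>i. q ! i) [0..<length q] = q" by (rule map_nth)
  have cm: "map (map (\<lambda>i. q ! i)) c \<in> cutsof q"
    using cutsof_map[OF c, of "\<lambda>i. q ! i"] unfolding n qm .
  have big: "take k c0 @ map (map (\<lambda>i. q ! i)) c @ drop (Suc k) c0 \<in> cutsof [0..<length A]"
    by (rule cutsof_cong[OF cm c0e])
  have me: "map (\<lambda>i. q ! i) e \<in> set (take k c0 @ map (map (\<lambda>i. q ! i)) c @ drop (Suc k) c0)"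
    using e by auto
  have se: "set e \<subseteq> {..<length q}" using cutsof_sub_set[OF c e] n by auto
  have "sym_of B e = sym_of A (map (\<lambda>i. q ! i) e)"
    using se unfolding Bq sym_of_def by (auto simp: subset_iff)
  then show ?thesis unfolding pieces_def cuts_idx_eq using big me by blast
qed

lemma T_supp:
  assumes "B \<in> pieces A" "T B w \<noteq> 0"
  shows "set w \<subseteq> pieces A"
proof -
  from assms(2) obtain c where c: "c \<in> cutsof [0..<length B]" "w = map (sym_of B) c"
    unfolding T_def cuts_idx_eq by (metis (mono_tags, lifting) Collect_empty_eq card.empty of_nat_0)
  then show ?thesis using pieces_of_pieces[OF assms(1)] by auto
qed

lemma T_mu:
  assumes "length B \<ge> 3" "T B w \<noteq> 0"
  shows "mu w = length B - 2"
proof -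
  from assms(2) obtain c where c: "c \<in> cutsof [0..<length B]" "w = map (sym_of B) c"
    unfolding T_def cuts_idx_eq by (metis (mono_tags, lifting) Collect_empty_eq card.empty of_nat_0)
  have "sum_list (map (\<lambda>e. length e - 2) c) = length B - 2"
    using cutsof_len[OF c(1)] assms(1) by simp
  then show ?thesis unfolding c(2) mu_def by (simp add: o_def sym_of_def)
qed

lemma T_Nil: "T B [] = 0"
  unfolding T_eq_Tc by (rule Tc_Nil)

lemma T_single: "T B [c] = (if c = B then 1 else 0)"
proof -
  have "T B ([] @ [c]) = (if c = sym_of B [0..<length B] then 1 else 0)"
    unfolding T_eq_Tc Tc_snoc[OF sorted_wrt_upt] by (auto simp: Tc_Nil case_prod_beta intro!: sum.neutral)
  moreover have "sym_of B [0..<length B] = B" by (simp add: sym_of_def map_nth)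
  ultimately show ?thesis by simp
qed

lemma Symm_T: "Symm (T B)"
  unfolding T_eq_Tc by (rule Symm_Tc) simp

lemma fsupp_T: "fsupp (T B)"
  unfolding T_eq_Tc by (rule fsupp_Tc) simp



definition lowvan :: "'a bar0 \<Rightarrow> nat \<Rightarrow> bool" where
  "lowvan x m \<longleftrightarrow> (\<forall>w. length w < m \<longrightarrow> x w = 0)"

lemma lowvan_dl: "lowvan x m \<Longrightarrow> lowvan (dl a x) (m - 1)"
  unfolding lowvan_def dl_def by auto

lemma shuffle_lowvan:
  "lowvan f p \<Longrightarrow> lowvan g q \<Longrightarrow> lowvan (shuffle_prod f g) (p + q)"
  unfolding lowvan_def
proof (intro allI impI)
  fix w
  show "\<forall>w. length w < p \<longrightarrow> f w = 0 \<Longrightarrow> \<forall>w. length w < q \<longrightarrow> g w = 0 \<Longrightarrow> length w < p + q \<Longrightarrow>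
    shuffle_prod f g w = 0"
  proof (induction w arbitrary: f g p q)
    case Nil then show ?case by (auto simp: shuffle_Nil)
  next
    case (Cons a w)
    have 1: "shuffle_prod (dl a f) g w = 0"
      by (rule Cons.IH[where p="p - 1" and q=q]) (use Cons.prems in \<open>auto simp: dl_def\<close>)
    have 2: "shuffle_prod f (dl a g) w = 0"
      by (rule Cons.IH[where p=p and q="q - 1"]) (use Cons.prems in \<open>auto simp: dl_def\<close>)
    show ?case by (simp add: shuffle_Cons 1 2)
  qed
qed

lemma shuffle_top: "lowvan g (length w) \<Longrightarrow> shuffle_prod h g w = h [] * g w"
proof (induction w arbitrary: g)
  case Nil then show ?case by (simp add: shuffle_Nil)
next
  case (Cons a w)
  have 1: "shuffle_prod (dl a h) g w = 0"
    using shuffle_lowvan[of "dl a h" 0 g "length w + 1"] Cons.prems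
    by (auto simp: lowvan_def)
  have 2: "shuffle_prod h (dl a g) w = h [] * g (a # w)"
    using Cons.IH[of "dl a g"] lowvan_dl[OF Cons.prems, of a] by (simp add: dl_def)
  show ?case by (simp add: shuffle_Cons 1 2)
qed

lemma shuffle_one:
  assumes "lowvan f 1" "lowvan g (length w - 1)"
  shows "shuffle_prod f g w = (\<Sum>i<length w. f [w ! i] * g (take i w @ drop (Suc i) w))"
  using assms(2)
proof (induction w arbitrary: g)
  case Nil then show ?case using assms(1) by (simp add: shuffle_Nil lowvan_def)
next
  case (Cons a w)
  have 1: "shuffle_prod (dl a f) g w = f [a] * g w"
    using shuffle_top[of g w "dl a f"] Cons.prems by (simp add: dl_def)
  have 2: "shuffle_prod f (dl a g) w = (\<Sum>i<length w. f [w ! i] * g (a # take i w @ drop (Suc i) w))"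
    using Cons.IH[of "dl a g"] lowvan_dl[OF Cons.prems, of a] by (simp add: dl_def)
  show ?case unfolding shuffle_Cons 1 2 length_Cons sum.lessThan_Suc_shift by simp
qed

lemma adj_swap:
  assumes "Symm x" "lowvan x m" "length u + length v + 2 = m"
  shows "x (u @ [a, b] @ v) = x (u @ [b, a] @ v)"
proof -
  have e: "{c. x (u @ c # v) \<noteq> 0} = {}" using assms(2,3) by (auto simp: lowvan_def)
  have "bar_d x u a b v = bar_d x u b a v" using assms(1) by (simp add: Symm_def)
  then show ?thesis unfolding bar_d_def e by simp
qed

lemma move_front:
  assumes "Symm x" "lowvan x m" "length u + length v + 1 = m"
  shows "x (a # u @ v) = x (u @ a # v)"
  using assms(3)
proof (induction u arbitrary: v rule: rev_induct)
  case Nil then show ?case by simp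
next
  case (snoc e u)
  have "x ((u @ [e]) @ a # v) = x (u @ [e, a] @ v)" by simp
  also have "\<dots> = x (u @ [a, e] @ v)" by (rule adj_swap[OF assms(1,2)]) (use snoc.prems in simp)
  also have "\<dots> = x (u @ a # (e # v))" by simp
  also have "\<dots> = x (a # u @ (e # v))" using snoc.IH[of "e # v"] snoc.prems by simp
  finally show ?case by simp
qed

lemma len_le_mu: "(\<forall>e\<in>set w. length e \<ge> 3) \<Longrightarrow> length w \<le> mu w"
  by (induction w) (auto simp: mu_def)

lemma mu_Cons: "mu (a # w) = (length a - 2) + mu w"
  by (simp add: mu_def)

definition Wb :: "'a bar0 \<Rightarrow> nat \<Rightarrow> bool" where
  "Wb x W \<longleftrightarrow> (\<forall>w. x w \<noteq> 0 \<longrightarrow> mu w \<le> W)"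

lemma shuffle_Wb: "Wb f p \<Longrightarrow> Wb g q \<Longrightarrow> Wb (shuffle_prod f g) (p + q)"
  unfolding Wb_def
proof (intro allI impI)
  fix w
  show "\<forall>w. f w \<noteq> 0 \<longrightarrow> mu w \<le> p \<Longrightarrow> \<forall>w. g w \<noteq> 0 \<longrightarrow> mu w \<le> q \<Longrightarrow> shuffle_prod f g w \<noteq> 0 \<Longrightarrow>
    mu w \<le> p + q"
  proof (induction w arbitrary: f g p q)
    case Nil then show ?case by (simp add: mu_def)
  next
    case (Cons a w)
    from Cons.prems(3) have "shuffle_prod (dl a f) g w \<noteq> 0 \<or> shuffle_prod f (dl a g) w \<noteq> 0"
      by (auto simp: shuffle_Cons)
    then show ?case
    proof
      assume h: "shuffle_prod (dl a f) g w \<noteq> 0"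
      then obtain w' where "f (a # w') \<noteq> 0" using dl_zero[of f a] shuffle_zero_left by metis
      then have aw: "length a - 2 \<le> p" using Cons.prems(1) mu_Cons[of a w'] by fastforce
      have "\<forall>w. dl a f w \<noteq> 0 \<longrightarrow> mu w \<le> p - (length a - 2)"
      proof (intro allI impI)
        fix w' assume "dl a f w' \<noteq> 0"
        then have "mu (a # w') \<le> p" using Cons.prems(1) by (simp add: dl_def)
        then show "mu w' \<le> p - (length a - 2)" by (simp add: mu_Cons)
      qed
      then have "mu w \<le> (p - (length a - 2)) + q"
        by (rule Cons.IH[OF _ Cons.prems(2) h])
      then show ?thesis using aw by (simp add: mu_Cons)
    next
      assume h: "shuffle_prod f (dl a g) w \<noteq> 0"
      then obtain w' where "g (a # w') \<noteq> 0" using dl_zero[of g a] shuffle_zero_right by metis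
      then have aw: "length a - 2 \<le> q" using Cons.prems(2) mu_Cons[of a w'] by fastforce
      have "\<forall>w. dl a g w \<noteq> 0 \<longrightarrow> mu w \<le> q - (length a - 2)"
      proof (intro allI impI)
        fix w' assume "dl a g w' \<noteq> 0"
        then have "mu (a # w') \<le> q" using Cons.prems(2) by (simp add: dl_def)
        then show "mu w' \<le> q - (length a - 2)" by (simp add: mu_Cons)
      qed
      then have "mu w \<le> p + (q - (length a - 2))"
        by (rule Cons.IH[OF Cons.prems(1) _ h])
      then show ?thesis using aw by (simp add: mu_Cons)
    qed
  qed
qed



lemma H0_iff: "x \<in> H0 A \<longleftrightarrow> fsupp x \<and> (\<forall>w. x w \<noteq> 0 \<longrightarrow> set w \<subseteq> pieces A) \<and> Symm x"
  unfolding H0_def bar0_space_def Symm_def fsupp_def by auto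

lemma H0_add: "x \<in> H0 A \<Longrightarrow> y \<in> H0 A \<Longrightarrow> (\<lambda>w. x w + y w) \<in> H0 A"
proof -
  assume x: "x \<in> H0 A" and y: "y \<in> H0 A"
  have f: "fsupp x" "fsupp y" using x y by (auto simp: H0_iff)
  have s: "\<forall>w. x w + y w \<noteq> 0 \<longrightarrow> set w \<subseteq> pieces A"
  proof (intro allI impI)
    fix w assume "x w + y w \<noteq> 0"
    then have "x w \<noteq> 0 \<or> y w \<noteq> 0" by auto
    then show "set w \<subseteq> pieces A" using x y by (auto simp: H0_iff)
  qed
  have "Symm (\<lambda>w. x w + y w)" unfolding Symm_def bar_d_add[OF f]
    using x y by (simp add: H0_iff Symm_def)
  then show ?thesis unfolding H0_iff using s fsupp_add[OF f] by blast
qed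

lemma H0_smult: "x \<in> H0 A \<Longrightarrow> (\<lambda>w. r * x w) \<in> H0 A"
  unfolding H0_iff Symm_def by (auto simp: fsupp_smult bar_d_smult)

lemma H0_bnd: "x \<in> H0 A \<Longrightarrow> \<exists>n. bnd (pieces A) n x"
proof -
  assume x: "x \<in> H0 A"
  then have f: "finite {w. x w \<noteq> 0}" by (simp add: H0_iff fsupp_def)
  show ?thesis
    using x f by (intro exI[of _ "Max (length ` {w. x w \<noteq> 0})"]) (auto simp: bnd_def H0_iff)
qed

lemma H0_shuffle: "x \<in> H0 A \<Longrightarrow> y \<in> H0 A \<Longrightarrow> shuffle_prod x y \<in> H0 A"
proof -
  assume x: "x \<in> H0 A" and y: "y \<in> H0 A"
  obtain n m where "bnd (pieces A) n x" "bnd (pieces A) m y" using H0_bnd x y by metis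
  then have b: "bnd (pieces A) (n + m) (shuffle_prod x y)" by (rule shuffle_bnd)
  have "fsupp (shuffle_prod x y)" "Symm (shuffle_prod x y)"
    using x y Symm_shuffle fsupp_shuffle by (auto simp: H0_iff)
  moreover have "\<forall>w. shuffle_prod x y w \<noteq> 0 \<longrightarrow> set w \<subseteq> pieces A" using b by (auto simp: bnd_def)
  ultimately show ?thesis unfolding H0_iff by blast
qed

lemma H0_one: "bar_one \<in> H0 A"
  unfolding H0_iff Symm_def fsupp_def
  by (auto simp: bar_one_def bar_d_def intro: finite_subset[of _ "{[]}"])

lemma H0_T: "B \<in> pieces A \<Longrightarrow> T B \<in> H0 A"
  unfolding H0_iff using Symm_T fsupp_T T_supp by blast

lemma H0_dl: "x \<in> H0 A \<Longrightarrow> dl B x \<in> H0 A"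
proof -
  assume x: "x \<in> H0 A"
  have "\<forall>w. dl B x w \<noteq> 0 \<longrightarrow> set w \<subseteq> pieces A"
  proof (intro allI impI)
    fix w assume "dl B x w \<noteq> 0"
    then have "x (B # w) \<noteq> 0" by (simp add: dl_def)
    then have "set (B # w) \<subseteq> pieces A" using x unfolding H0_iff by blast
    then show "set w \<subseteq> pieces A" by simp
  qed
  then show ?thesis using x fsupp_dl Symm_dl by (auto simp: H0_iff)
qed

lemma H0_zero: "(\<lambda>_. 0) \<in> H0 A"
  unfolding H0_iff Symm_def fsupp_def by (simp add: bar_d_zero)

lemma H0_sum: "finite I \<Longrightarrow> (\<And>i. i \<in> I \<Longrightarrow> f i \<in> H0 A) \<Longrightarrow> (\<lambda>w. \<Sum>i\<in>I. f i w) \<in> H0 A"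
proof (induction I rule: finite_induct)
  case empty then show ?case using H0_zero by simp
next
  case (insert a I)
  then show ?case using H0_add[of "f a" A "\<lambda>w. \<Sum>i\<in>I. f i w"] by simp
qed

abbreviation SG :: "'a list \<Rightarrow> 'a bar0 set" where
  "SG A \<equiv> subalg_gen {T B | B. B \<in> pieces A}"

lemma SG_zero: "(\<lambda>_. 0) \<in> SG A"
  using subalg_gen.smult[OF subalg_gen.one, of 0] by simp

lemma SG_sum: "finite I \<Longrightarrow> (\<And>i. i \<in> I \<Longrightarrow> f i \<in> SG A) \<Longrightarrow> (\<lambda>w. \<Sum>i\<in>I. f i w) \<in> SG A"
proof (induction I rule: finite_induct)
  case empty then show ?case using SG_zero by simp
next
  case (insert a I)
  then show ?case using subalg_gen.add[of "f a" _ "\<lambda>w. \<Sum>i\<in>I. f i w"] by simp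
qed

lemma SG_sub_H0: "x \<in> SG A \<Longrightarrow> x \<in> H0 A"
proof (induction rule: subalg_gen.induct)
  case (gen x) then show ?case using H0_T by blast
next
  case one then show ?case by (rule H0_one)
next
  case (add x y) then show ?case using H0_add by blast
next
  case (smult x r) then show ?case using H0_smult by blast
next
  case (mult x y) then show ?case using H0_shuffle by blast
qed



lemma z_top:
  assumes x: "x \<in> H0 A" and lv: "lowvan x m" and m: "m \<ge> 1" and lw: "length w = m"
  shows "(\<Sum>B\<in>pieces A. shuffle_prod (T B) (dl B x) w) = of_nat m * x w"
proof -
  have sx: "Symm x" using x by (simp add: H0_iff)
  define rest where "rest i = take i w @ drop (Suc i) w" for i
  have T1: "lowvan (T B) 1" for B by (simp add: lowvan_def T_Nil)
  have "(\<Sum>B\<in>pieces A. shuffle_prod (T B) (dl B x) w) =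
      (\<Sum>B\<in>pieces A. \<Sum>i<m. T B [w ! i] * dl B x (rest i))"
  proof (rule sum.cong[OF refl])
    fix B
    have "lowvan (dl B x) (length w - 1)" using lowvan_dl[OF lv, of B] lw by simp
    from shuffle_one[OF T1 this] show "shuffle_prod (T B) (dl B x) w = (\<Sum>i<m. T B [w ! i] * dl B x (rest i))"
      using lw unfolding rest_def by simp
  qed
  also have "\<dots> = (\<Sum>i<m. \<Sum>B\<in>pieces A. if w ! i = B then x (B # rest i) else 0)"
    by (subst sum.swap) (auto simp: T_single dl_def intro!: sum.cong)
  also have "\<dots> = (\<Sum>i<m. if w ! i \<in> pieces A then x w else 0)"
  proof (rule sum.cong[OF refl])
    fix i assume i: "i \<in> {..<m}"
    have "x (w ! i # rest i) = x w"
    proof -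
      have "x (w ! i # take i w @ drop (Suc i) w) = x (take i w @ w ! i # drop (Suc i) w)"
        by (rule move_front[OF sx lv]) (use i lw in auto)
      also have "take i w @ w ! i # drop (Suc i) w = w" using i lw by (simp add: id_take_nth_drop[symmetric])
      finally show ?thesis unfolding rest_def .
    qed
    then show "(\<Sum>B\<in>pieces A. if w ! i = B then x (B # rest i) else 0) = (if w ! i \<in> pieces A then x w else 0)"
      using finite_pieces[of A] by (simp add: sum.delta')
  qed
  also have "\<dots> = of_nat m * x w"
  proof (cases "x w = 0")
    case True then show ?thesis by (simp cong: if_cong)
  next
    case False
    then have "set w \<subseteq> pieces A" using x by (simp add: H0_iff)
    then have "\<forall>i\<in>{..<m}. w ! i \<in> pieces A" using lw by auto
    then show ?thesis by simp
  qed
  finally show ?thesis .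
qed

lemma main_ind:
  assumes len: "length A \<ge> 3"
  shows "\<forall>x. x \<in> H0 A \<longrightarrow> Wb x W \<longrightarrow> x \<in> SG A"
proof (induction W rule: less_induct)
  case (less W)
  have inner: "\<forall>x. x \<in> H0 A \<longrightarrow> Wb x W \<longrightarrow> lowvan x (W + 1 - k) \<longrightarrow> x \<in> SG A" for k
  proof (induction k)
    case 0
    show ?case
    proof (intro allI impI)
      fix x assume x: "x \<in> H0 A" "Wb x W" "lowvan x (W + 1 - 0)"
      have "x = (\<lambda>_. 0)"
      proof
        fix w show "x w = 0"
        proof (rule ccontr)
          assume nz: "x w \<noteq> 0"
          then have "set w \<subseteq> pieces A" using x(1) by (simp add: H0_iff)
          then have "length w \<le> mu w" using pieces_len[OF len] by (intro len_le_mu) auto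
          moreover have "mu w \<le> W" using x(2) nz by (simp add: Wb_def)
          ultimately show False using x(3) nz by (simp add: lowvan_def)
        qed
      qed
      then show "x \<in> SG A" using SG_zero by simp
    qed
  next
    case (Suc k)
    show ?case
    proof (intro allI impI)
      fix x assume x: "x \<in> H0 A" "Wb x W" "lowvan x (W + 1 - Suc k)"
      show "x \<in> SG A"
      proof (cases "W + 1 - Suc k = W + 1 - k")
        case True then show ?thesis using Suc.IH x by simp
      next
        case False
        define m where "m = W + 1 - Suc k"
        have mk: "W + 1 - k = m + 1" "m \<le> W" using False unfolding m_def by auto
        have lv: "lowvan x m" using x(3) unfolding m_def .
        show ?thesis
        proof (cases "m = 0")
          case True
          define x' where "x' = (\<lambda>w. x w + (- x []) * bar_one w)"
          have x'H: "x' \<in> H0 A" unfolding x'_def by (intro H0_add H0_smult x(1) H0_one)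
          have x'W: "Wb x' W" using x(2) by (auto simp: Wb_def x'_def bar_one_def mu_def)
          have x'l: "lowvan x' (W + 1 - k)" unfolding mk True
            by (auto simp: lowvan_def x'_def bar_one_def)
          have "x' \<in> SG A" using Suc.IH x'H x'W x'l by blast
          then have "(\<lambda>w. x' w + x [] * bar_one w) \<in> SG A"
            by (intro subalg_gen.add subalg_gen.smult subalg_gen.one)
          moreover have "(\<lambda>w. x' w + x [] * bar_one w) = x" by (auto simp: x'_def fun_eq_iff)
          ultimately show ?thesis by simp
        next
          case False
          then have m1: "m \<ge> 1" by simp
          then have W1: "W \<ge> 1" using mk by simp
          define z where "z = (\<lambda>w. \<Sum>B\<in>pieces A. shuffle_prod (T B) (dl B x) w)"
          have dlH: "dl B x \<in> H0 A" for B using H0_dl[OF x(1)] .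
          have dlW: "Wb (dl B x) (W - 1)" if B: "B \<in> pieces A" for B
          proof -
            have "length B \<ge> 3" using pieces_len[OF len B] .
            then show ?thesis using x(2) by (auto simp: Wb_def dl_def mu_Cons)
          qed
          have dlS: "dl B x \<in> SG A" if "B \<in> pieces A" for B
            using less.IH[of "W - 1"] W1 dlH dlW[OF that] by simp
          have zS: "z \<in> SG A" unfolding z_def
            by (rule SG_sum[OF finite_pieces]) (auto intro: subalg_gen.mult subalg_gen.gen dlS)
          have zH: "z \<in> H0 A" unfolding z_def
            by (rule H0_sum[OF finite_pieces]) (auto intro: H0_shuffle H0_T dlH)
          have termW: "Wb (shuffle_prod (T B) (dl B x)) W" if B: "B \<in> pieces A" for B
          proof (cases "\<exists>w'. x (B # w') \<noteq> 0")
            case True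
            then obtain w' where "x (B # w') \<noteq> 0" by blast
            then have le: "length B - 2 \<le> W" using x(2) by (auto simp: Wb_def mu_Cons)
            have "Wb (T B) (length B - 2)" by (simp add: Wb_def T_mu[OF pieces_len[OF len B]])
            moreover have "Wb (dl B x) (W - (length B - 2))" using x(2) by (auto simp: Wb_def dl_def mu_Cons)
            ultimately have "Wb (shuffle_prod (T B) (dl B x)) ((length B - 2) + (W - (length B - 2)))"
              by (rule shuffle_Wb)
            then show ?thesis using le by simp
          next
            case False
            then have "dl B x = (\<lambda>_. 0)" by (auto simp: dl_def fun_eq_iff)
            then show ?thesis by (simp add: shuffle_zero_right Wb_def)
          qed
          have zW: "Wb z W" unfolding Wb_def
          proof (intro allI impI)
            fix w assume "z w \<noteq> 0"
            then obtain B where "B \<in> pieces A" "shuffle_prod (T B) (dl B x) w \<noteq> 0"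
              unfolding z_def by (meson sum.not_neutral_contains_not_neutral)
            then show "mu w \<le> W" using termW by (auto simp: Wb_def)
          qed
          have zl: "lowvan z m" unfolding lowvan_def z_def
          proof (intro allI impI sum.neutral ballI)
            fix w :: "'a list list" and B assume "length w < m"
            moreover have "lowvan (shuffle_prod (T B) (dl B x)) (1 + (m - 1))"
              by (rule shuffle_lowvan) (use lowvan_dl[OF lv] in \<open>auto simp: lowvan_def T_Nil\<close>)
            ultimately show "shuffle_prod (T B) (dl B x) w = 0" using m1 by (simp add: lowvan_def)
          qed
          define x' where "x' = (\<lambda>w. x w + (- (1 / of_nat m)) * z w)"
          have x'H: "x' \<in> H0 A" unfolding x'_def by (intro H0_add H0_smult x(1) zH)
          have x'W: "Wb x' W" unfolding Wb_def
          proof (intro allI impI)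
            fix w :: "'a list list" assume "x' w \<noteq> 0"
            then have "x w \<noteq> 0 \<or> z w \<noteq> 0" by (auto simp: x'_def)
            then show "mu w \<le> W" using x(2) zW by (auto simp: Wb_def)
          qed
          have x'l: "lowvan x' (W + 1 - k)" unfolding mk lowvan_def
          proof (intro allI impI)
            fix w :: "'a list list" assume lw: "length w < m + 1"
            show "x' w = 0"
            proof (cases "length w < m")
              case True then show ?thesis using lv zl by (simp add: lowvan_def x'_def)
            next
              case False
              then have "length w = m" using lw by simp
              then have "z w = of_nat m * x w" unfolding z_def by (rule z_top[OF x(1) lv m1])
              then show ?thesis using m1 by (simp add: x'_def)
            qed
          qed
          have "x' \<in> SG A" using Suc.IH x'H x'W x'l by blast
          then have "(\<lambda>w. x' w + (1 / of_nat m) * z w) \<in> SG A"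
            by (intro subalg_gen.add subalg_gen.smult zS)
          moreover have "(\<lambda>w. x' w + (1 / of_nat m) * z w) = x" by (auto simp: x'_def fun_eq_iff)
          ultimately show ?thesis by simp
        qed
      qed
    qed
  qed
  show ?case
  proof (intro allI impI)
    fix x assume "x \<in> H0 A" "Wb x W"
    then show "x \<in> SG A" using inner[of "W + 1"] by (simp add: lowvan_def)
  qed
qed

theorem lemma2p5:
  fixes A :: "'a list"
  assumes "is_generator A"
  shows "H0 A = subalg_gen {T B | B. B \<in> pieces A}"
proof
  have len: "length A \<ge> 3" using assms by (simp add: is_generator_def)
  show "H0 A \<subseteq> subalg_gen {T B | B. B \<in> pieces A}"
  proof
    fix x assume x: "x \<in> H0 A"
    then have f: "finite {w. x w \<noteq> 0}" by (simp add: H0_iff fsupp_def)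
    have "Wb x (Max (mu ` {w. x w \<noteq> 0}))" unfolding Wb_def using f by auto
    then show "x \<in> subalg_gen {T B | B. B \<in> pieces A}" using main_ind[OF len] x by blast
  qed
  show "subalg_gen {T B | B. B \<in> pieces A} \<subseteq> H0 A" using SG_sub_H0 by blast
qed


end
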